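(* Let $G$ be a t.d.l.c. group and $K$ a compact open subgroup of $G$. Then $$\mathrm{dH}^1(G,\mathbb{Q}[G/K])\cong \frac{\mathcal{A}Inv_K(G,\mathbb{Q})}{C(G/K)+\mathbb{Q}[G/K]^K}.$$
   Context: $\mathrm{dH}^k(G,-)$ is the $k$-th right derived functor of $\mathrm{Hom}_{\mathbb{Q}[G]}(\mathbb{Q},-)$ on the abelian category of discrete left $\mathbb{Q}[G]$-modules (modules whose point stabilizers are open). Functions $G/K\to\mathbb{Q}$ carry the $G$-action $(g\cdot\alpha)(x)=\alpha(g^{-1}x)$; $\alpha=_a\beta$ means they differ at only finitely many points; $\mathbb{Q}[G/K]$ is identified with the almost zero functions via $\sum q_x x\mapsto(x\mapsto q_x)$, and $\mathbb{Q}[G/K]^K$ denotes its $K$-fixed elements. $\mathcal{A}Inv_K(G,\mathbb{Q})$ is the space of functions $\alpha\colon G/K\to\mathbb{Q}$ with $g\cdot\alpha=_a\alpha$ for all $g\in G$ and $k\cdot\alpha=\alpha$ for all $k\in K$. $C(G/K)$ is the space of constant functions. *)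

theory Defs
  imports "HOL-Analysis.Analysis" "HOL-Algebra.Left_Coset"
begin

definition topological_group :: "('g, 'b) monoid_scheme \<Rightarrow> 'g topology \<Rightarrow> bool" where
  "topological_group G T \<longleftrightarrow> group G \<and> topspace T = carrier G \<and>
     continuous_map (prod_topology T T) T (\<lambda>(x, y). x \<otimes>\<^bsub>G\<^esub> y) \<and>
     continuous_map T T (\<lambda>x. inv\<^bsub>G\<^esub> x)"

definition totally_disconnected_space :: "'a topology \<Rightarrow> bool" where
  "totally_disconnected_space T \<longleftrightarrow>
     (\<forall>S. connectedin T S \<longrightarrow> (\<exists>x. S \<subseteq> {x}))"

definition tdlc_group :: "('g, 'b) monoid_scheme \<Rightarrow> 'g topology \<Rightarrow> bool" where
  "tdlc_group G T \<longleftrightarrow> topological_group G T \<and> Hausdorff_space T \<and>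
     locally_compact_space T \<and> totally_disconnected_space T"

record ('g, 'm) qg_module =
  mcar  :: "'m set"
  madd  :: "'m \<Rightarrow> 'm \<Rightarrow> 'm"
  mzero :: "'m"
  msmul :: "rat \<Rightarrow> 'm \<Rightarrow> 'm"
  mact  :: "'g \<Rightarrow> 'm \<Rightarrow> 'm"

definition rat_vector_space :: "('g, 'm) qg_module \<Rightarrow> bool" where
  "rat_vector_space M \<longleftrightarrow>
     mzero M \<in> mcar M \<and>
     (\<forall>x\<in>mcar M. \<forall>y\<in>mcar M. madd M x y \<in> mcar M) \<and>
     (\<forall>q. \<forall>x\<in>mcar M. msmul M q x \<in> mcar M) \<and>
     (\<forall>x\<in>mcar M. \<forall>y\<in>mcar M. \<forall>z\<in>mcar M. madd M (madd M x y) z = madd M x (madd M y z)) \<and>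
     (\<forall>x\<in>mcar M. \<forall>y\<in>mcar M. madd M x y = madd M y x) \<and>
     (\<forall>x\<in>mcar M. madd M (mzero M) x = x) \<and>
     (\<forall>x\<in>mcar M. \<exists>y\<in>mcar M. madd M x y = mzero M) \<and>
     (\<forall>q. \<forall>x\<in>mcar M. \<forall>y\<in>mcar M. msmul M q (madd M x y) = madd M (msmul M q x) (msmul M q y)) \<and>
     (\<forall>p q. \<forall>x\<in>mcar M. msmul M (p + q) x = madd M (msmul M p x) (msmul M q x)) \<and>
     (\<forall>p q. \<forall>x\<in>mcar M. msmul M (p * q) x = msmul M p (msmul M q x)) \<and>
     (\<forall>x\<in>mcar M. msmul M 1 x = x)"

definition qg_module :: "('g, 'b) monoid_scheme \<Rightarrow> ('g, 'm) qg_module \<Rightarrow> bool" where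
  "qg_module G M \<longleftrightarrow> rat_vector_space M \<and>
     (\<forall>g\<in>carrier G. \<forall>x\<in>mcar M. mact M g x \<in> mcar M) \<and>
     (\<forall>g\<in>carrier G. \<forall>x\<in>mcar M. \<forall>y\<in>mcar M. mact M g (madd M x y) = madd M (mact M g x) (mact M g y)) \<and>
     (\<forall>g\<in>carrier G. \<forall>q. \<forall>x\<in>mcar M. mact M g (msmul M q x) = msmul M q (mact M g x)) \<and>
     (\<forall>x\<in>mcar M. mact M \<one>\<^bsub>G\<^esub> x = x) \<and>
     (\<forall>g\<in>carrier G. \<forall>h\<in>carrier G. \<forall>x\<in>mcar M. mact M (g \<otimes>\<^bsub>G\<^esub> h) x = mact M g (mact M h x))"

definition discrete_module :: "('g, 'b) monoid_scheme \<Rightarrow> 'g topology \<Rightarrow> ('g, 'm) qg_module \<Rightarrow> bool" where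
  "discrete_module G T M \<longleftrightarrow> qg_module G M \<and>
     (\<forall>x\<in>mcar M. openin T {g \<in> carrier G. mact M g x = x})"

definition module_hom ::
  "('g, 'b) monoid_scheme \<Rightarrow> ('g, 'm) qg_module \<Rightarrow> ('g, 'n) qg_module \<Rightarrow> ('m \<Rightarrow> 'n) \<Rightarrow> bool" where
  "module_hom G M N f \<longleftrightarrow>
     (\<forall>x\<in>mcar M. f x \<in> mcar N) \<and>
     (\<forall>x\<in>mcar M. \<forall>y\<in>mcar M. f (madd M x y) = madd N (f x) (f y)) \<and>
     (\<forall>q. \<forall>x\<in>mcar M. f (msmul M q x) = msmul N q (f x)) \<and>
     (\<forall>g\<in>carrier G. \<forall>x\<in>mcar M. f (mact M g x) = mact N g (f x))"

text \<open>Since HOL cannot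
  quantify over types inside a definition, the test modules range over all discrete
  modules whose carrier lives in the same type as the module itself.\<close>

definition injective_discrete_module ::
  "('g, 'b) monoid_scheme \<Rightarrow> 'g topology \<Rightarrow> ('g, 'm) qg_module \<Rightarrow> bool" where
  "injective_discrete_module G T I \<longleftrightarrow> discrete_module G T I \<and>
     (\<forall>(A :: ('g, 'm) qg_module) (B :: ('g, 'm) qg_module) i f.
        discrete_module G T A \<and> discrete_module G T B \<and>
        module_hom G A B i \<and> inj_on i (mcar A) \<and> module_hom G A I f \<longrightarrow>
        (\<exists>h. module_hom G B I h \<and> (\<forall>a\<in>mcar A. h (i a) = f a)))"

text \<open>The beginning  0 \<rightarrow> M \<rightarrow> I0 \<rightarrow> I1 \<rightarrow> I2  of an injective resolution of M
  in the category of discrete Q[G]-modules (enough to compute the first derived functor).\<close>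

definition injective_resolution_1 ::
  "('g, 'b) monoid_scheme \<Rightarrow> 'g topology \<Rightarrow> ('g, 'n) qg_module \<Rightarrow>
   ('g, 'm) qg_module \<Rightarrow> ('g, 'm) qg_module \<Rightarrow> ('g, 'm) qg_module \<Rightarrow>
   ('n \<Rightarrow> 'm) \<Rightarrow> ('m \<Rightarrow> 'm) \<Rightarrow> ('m \<Rightarrow> 'm) \<Rightarrow> bool" where
  "injective_resolution_1 G T M I0 I1 I2 \<epsilon> d0 d1 \<longleftrightarrow>
     discrete_module G T M \<and>
     injective_discrete_module G T I0 \<and> injective_discrete_module G T I1 \<and>
     injective_discrete_module G T I2 \<and>
     module_hom G M I0 \<epsilon> \<and> module_hom G I0 I1 d0 \<and> module_hom G I1 I2 d1 \<and>
     inj_on \<epsilon> (mcar M) \<and>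
     \<epsilon> ` mcar M = {x \<in> mcar I0. d0 x = mzero I1} \<and>
     d0 ` mcar I0 = {x \<in> mcar I1. d1 x = mzero I2}"

text \<open>Hom_{Q[G]}(Q, M) = the G-fixed points.\<close>

definition fixed_points :: "('g, 'b) monoid_scheme \<Rightarrow> ('g, 'm) qg_module \<Rightarrow> 'm set" where
  "fixed_points G M = {x \<in> mcar M. \<forall>g\<in>carrier G. mact M g x = x}"

text \<open>dH^1 computed from the resolution: cocycles modulo coboundaries of the complex
  of G-fixed points  I0^G \<rightarrow> I1^G \<rightarrow> I2^G.\<close>

definition dH1_cocycles :: "('g, 'b) monoid_scheme \<Rightarrow> ('g, 'm) qg_module \<Rightarrow> ('g, 'm) qg_module \<Rightarrow> ('m \<Rightarrow> 'm) \<Rightarrow> 'm set" where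
  "dH1_cocycles G I1 I2 d1 = {x \<in> fixed_points G I1. d1 x = mzero I2}"

definition dH1_coboundaries :: "('g, 'b) monoid_scheme \<Rightarrow> ('g, 'm) qg_module \<Rightarrow> ('m \<Rightarrow> 'm) \<Rightarrow> 'm set" where
  "dH1_coboundaries G I0 d0 = d0 ` fixed_points G I0"

text \<open>Functions G/K \<rightarrow> Q are represented as functions on cosets (type 'g set \<Rightarrow> rat)
  vanishing outside the set of left cosets lcosets K.\<close>

definition coset_funs :: "('g, 'b) monoid_scheme \<Rightarrow> 'g set \<Rightarrow> ('g set \<Rightarrow> rat) set" where
  "coset_funs G K = {\<alpha>. \<forall>x. x \<notin> lcosets\<^bsub>G\<^esub> K \<longrightarrow> \<alpha> x = 0}"

definition coset_act :: "('g, 'b) monoid_scheme \<Rightarrow> 'g set \<Rightarrow> 'g \<Rightarrow> ('g set \<Rightarrow> rat) \<Rightarrow> ('g set \<Rightarrow> rat)" where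
  "coset_act G K g \<alpha> = (\<lambda>x. if x \<in> lcosets\<^bsub>G\<^esub> K then \<alpha> ((inv\<^bsub>G\<^esub> g) <#\<^bsub>G\<^esub> x) else 0)"

definition almost_equal :: "('a \<Rightarrow> rat) \<Rightarrow> ('a \<Rightarrow> rat) \<Rightarrow> bool" where
  "almost_equal \<alpha> \<beta> \<longleftrightarrow> finite {x. \<alpha> x \<noteq> \<beta> x}"

text \<open>Q[G/K] as the almost zero functions G/K \<rightarrow> Q, as a Q[G]-module.\<close>

definition QGK :: "('g, 'b) monoid_scheme \<Rightarrow> 'g set \<Rightarrow> ('g, 'g set \<Rightarrow> rat) qg_module" where
  "QGK G K = \<lparr> mcar = {\<alpha> \<in> coset_funs G K. almost_equal \<alpha> (\<lambda>_. 0)},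
              madd = (\<lambda>\<alpha> \<beta> x. \<alpha> x + \<beta> x), mzero = (\<lambda>_. 0),
              msmul = (\<lambda>q \<alpha> x. q * \<alpha> x), mact = coset_act G K \<rparr>"

definition AInv :: "('g, 'b) monoid_scheme \<Rightarrow> 'g set \<Rightarrow> ('g set \<Rightarrow> rat) set" where
  "AInv G K = {\<alpha> \<in> coset_funs G K.
      (\<forall>g\<in>carrier G. almost_equal (coset_act G K g \<alpha>) \<alpha>) \<and>
      (\<forall>k\<in>K. coset_act G K k \<alpha> = \<alpha>)}"

definition const_coset_funs :: "('g, 'b) monoid_scheme \<Rightarrow> 'g set \<Rightarrow> ('g set \<Rightarrow> rat) set" where
  "const_coset_funs G K = {\<alpha> \<in> coset_funs G K. \<exists>c. \<forall>x\<in>lcosets\<^bsub>G\<^esub> K. \<alpha> x = c}"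

definition QGK_fixed :: "('g, 'b) monoid_scheme \<Rightarrow> 'g set \<Rightarrow> ('g set \<Rightarrow> rat) set" where
  "QGK_fixed G K = {\<alpha> \<in> mcar (QGK G K). \<forall>k\<in>K. coset_act G K k \<alpha> = \<alpha>}"

text \<open>quotient_iso Z add smul B A W  states  Z/B \<cong> A/W  as Q-vector spaces, where
  Z is a subspace of a module with operations add, smul and A is a space of rational
  valued functions: there is a Q-linear map f : Z \<rightarrow> A inducing a bijection
  Z/B \<rightarrow> A/W (surjective modulo W, with f^{-1}(W) = B).  Every isomorphism of the
  quotients arises this way (lift along a linear section).\<close>

definition quotient_iso ::
  "'m set \<Rightarrow> ('m \<Rightarrow> 'm \<Rightarrow> 'm) \<Rightarrow> (rat \<Rightarrow> 'm \<Rightarrow> 'm) \<Rightarrow> 'm set \<Rightarrow>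
   ('a \<Rightarrow> rat) set \<Rightarrow> ('a \<Rightarrow> rat) set \<Rightarrow> bool" where
  "quotient_iso Z add smul B A W \<longleftrightarrow>
     (\<exists>f. (\<forall>z\<in>Z. f z \<in> A) \<and>
          (\<forall>x\<in>Z. \<forall>y\<in>Z. f (add x y) = (\<lambda>a. f x a + f y a)) \<and>
          (\<forall>q. \<forall>x\<in>Z. f (smul q x) = (\<lambda>a. q * f x a)) \<and>
          (\<forall>a\<in>A. \<exists>z\<in>Z. (\<lambda>b. a b - f z b) \<in> W) \<and>
          (\<forall>z\<in>Z. f z \<in> W \<longleftrightarrow> z \<in> B))"

end

theory Submission imports Defs "HOL-Library.Function_Algebras" "HOL-Library.Countable" begin

section \<open>Abstract rational vector spaces\<close>

locale rvs =
  fixes M :: "('g, 'm) qg_module"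
  assumes rvs: "rat_vector_space M"
begin

lemma zero_closed[simp]: "mzero M \<in> mcar M"
  using rvs unfolding rat_vector_space_def by auto
lemma add_closed[simp]: "x \<in> mcar M \<Longrightarrow> y \<in> mcar M \<Longrightarrow> madd M x y \<in> mcar M"
  using rvs unfolding rat_vector_space_def by auto
lemma smul_closed[simp]: "x \<in> mcar M \<Longrightarrow> msmul M q x \<in> mcar M"
  using rvs unfolding rat_vector_space_def by auto
lemma add_assoc: "x \<in> mcar M \<Longrightarrow> y \<in> mcar M \<Longrightarrow> z \<in> mcar M \<Longrightarrow>
   madd M (madd M x y) z = madd M x (madd M y z)"
  using rvs unfolding rat_vector_space_def by auto
lemma add_comm: "x \<in> mcar M \<Longrightarrow> y \<in> mcar M \<Longrightarrow> madd M x y = madd M y x"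
  using rvs unfolding rat_vector_space_def by auto
lemma zero_l[simp]: "x \<in> mcar M \<Longrightarrow> madd M (mzero M) x = x"
  using rvs unfolding rat_vector_space_def by auto
lemma inverse: "x \<in> mcar M \<Longrightarrow> \<exists>y\<in>mcar M. madd M x y = mzero M"
  using rvs unfolding rat_vector_space_def by blast
lemma smul_add: "x \<in> mcar M \<Longrightarrow> y \<in> mcar M \<Longrightarrow> msmul M q (madd M x y) = madd M (msmul M q x) (msmul M q y)"
  using rvs unfolding rat_vector_space_def by auto
lemma add_smul: "x \<in> mcar M \<Longrightarrow> msmul M (p + q) x = madd M (msmul M p x) (msmul M q x)"
  using rvs unfolding rat_vector_space_def by auto
lemma smul_smul: "x \<in> mcar M \<Longrightarrow> msmul M (p * q) x = msmul M p (msmul M q x)"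
  using rvs unfolding rat_vector_space_def by auto
lemma one_smul[simp]: "x \<in> mcar M \<Longrightarrow> msmul M 1 x = x"
  using rvs unfolding rat_vector_space_def by auto

lemma zero_r[simp]: "x \<in> mcar M \<Longrightarrow> madd M x (mzero M) = x"
  using add_comm zero_l zero_closed by metis

lemma add_lcomm: "x \<in> mcar M \<Longrightarrow> y \<in> mcar M \<Longrightarrow> z \<in> mcar M \<Longrightarrow>
   madd M x (madd M y z) = madd M y (madd M x z)"
  by (metis add_assoc add_comm)

lemma add_4: "a \<in> mcar M \<Longrightarrow> b \<in> mcar M \<Longrightarrow> c \<in> mcar M \<Longrightarrow> d \<in> mcar M \<Longrightarrow>
   madd M (madd M a b) (madd M c d) = madd M (madd M a c) (madd M b d)"
  by (simp add: add_assoc add_lcomm)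

lemma cancel_r:
  assumes "a \<in> mcar M" "b \<in> mcar M" "c \<in> mcar M" "madd M a c = madd M b c"
  shows "a = b"
proof -
  obtain w where w: "w \<in> mcar M" "madd M c w = mzero M" using inverse assms by blast
  have "a = madd M a (madd M c w)" using assms w by simp
  also have "\<dots> = madd M (madd M a c) w" using assms(1,3) w by (simp add: add_assoc)
  also have "\<dots> = madd M (madd M b c) w" using assms by simp
  also have "\<dots> = madd M b (madd M c w)" using assms(2,3) w by (simp add: add_assoc)
  also have "\<dots> = b" using assms w by simp
  finally show ?thesis .
qed

lemma zero_smul[simp]: "x \<in> mcar M \<Longrightarrow> msmul M 0 x = mzero M"
proof -
  assume x: "x \<in> mcar M"
  have "madd M (msmul M 0 x) (msmul M 0 x) = madd M (mzero M) (msmul M 0 x)"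
    using add_smul[OF x, of 0 0] x by simp
  then show ?thesis using cancel_r x by (metis smul_closed zero_closed)
qed

lemma smul_zero[simp]: "msmul M q (mzero M) = mzero M"
  by (metis zero_closed zero_smul smul_smul mult_zero_right)

lemma neg_r[simp]: "x \<in> mcar M \<Longrightarrow> madd M x (msmul M (-1) x) = mzero M"
  by (metis add_smul one_smul zero_smul add.right_inverse)

lemma neg_l[simp]: "x \<in> mcar M \<Longrightarrow> madd M (msmul M (-1) x) x = mzero M"
  by (metis add_comm neg_r smul_closed)

lemma neg_r2[simp]: "x \<in> mcar M \<Longrightarrow> y \<in> mcar M \<Longrightarrow> madd M x (madd M (msmul M (-1) x) y) = y"
  by (metis add_assoc neg_r smul_closed zero_l)

lemma neg_l2[simp]: "x \<in> mcar M \<Longrightarrow> y \<in> mcar M \<Longrightarrow> madd M (msmul M (-1) x) (madd M x y) = y"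
  by (metis add_assoc neg_l smul_closed zero_l)

lemma sub_chain: "a \<in> mcar M \<Longrightarrow> b \<in> mcar M \<Longrightarrow> c \<in> mcar M \<Longrightarrow>
   madd M (madd M a (msmul M (-1) b)) (madd M c (msmul M (-1) a)) = madd M c (msmul M (-1) b)"
proof -
  assume abc: "a \<in> mcar M" "b \<in> mcar M" "c \<in> mcar M"
  have "madd M (madd M a (msmul M (-1) b)) (madd M c (msmul M (-1) a))
      = madd M c (madd M (msmul M (-1) a) (madd M a (msmul M (-1) b)))"
  proof -
    have "madd M (madd M a (msmul M (-1) b)) (madd M c (msmul M (-1) a))
        = madd M (madd M c (msmul M (-1) a)) (madd M a (msmul M (-1) b))"
      using abc by (intro add_comm) simp_all
    also have "\<dots> = madd M c (madd M (msmul M (-1) a) (madd M a (msmul M (-1) b)))"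
      using abc by (intro add_assoc) simp_all
    finally show ?thesis .
  qed
  also have "\<dots> = madd M c (msmul M (-1) b)"
    using abc by (simp add: neg_l2)
  finally show ?thesis .
qed

lemma eq_iff_diff: "x \<in> mcar M \<Longrightarrow> y \<in> mcar M \<Longrightarrow> madd M x (msmul M (-1) y) = mzero M \<Longrightarrow> x = y"
  by (metis cancel_r neg_l add_comm smul_closed)

end

lemma hom_zero:
  assumes "rvs M" "rvs N" "module_hom G M N f"
  shows "f (mzero M) = mzero N"
proof -
  interpret M: rvs M by fact
  interpret N: rvs N by fact
  have "f (msmul M 0 (mzero M)) = msmul N 0 (f (mzero M))"
    using assms(3) M.zero_closed unfolding module_hom_def by blast
  moreover have "f (mzero M) \<in> mcar N" using assms(3) M.zero_closed unfolding module_hom_def by blast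
  ultimately show ?thesis by simp
qed

lemma hom_add: "module_hom G M N f \<Longrightarrow> x \<in> mcar M \<Longrightarrow> y \<in> mcar M \<Longrightarrow> f (madd M x y) = madd N (f x) (f y)"
  unfolding module_hom_def by blast
lemma hom_smul: "module_hom G M N f \<Longrightarrow> x \<in> mcar M \<Longrightarrow> f (msmul M q x) = msmul N q (f x)"
  unfolding module_hom_def by blast
lemma hom_act: "module_hom G M N f \<Longrightarrow> g \<in> carrier G \<Longrightarrow> x \<in> mcar M \<Longrightarrow> f (mact M g x) = mact N g (f x)"
  unfolding module_hom_def by blast
lemma hom_closed: "module_hom G M N f \<Longrightarrow> x \<in> mcar M \<Longrightarrow> f x \<in> mcar N"
  unfolding module_hom_def by blast

lemma qg_rvs: "qg_module G M \<Longrightarrow> rvs M"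
  unfolding qg_module_def rvs_def by blast
lemma act_closed: "qg_module G M \<Longrightarrow> g \<in> carrier G \<Longrightarrow> x \<in> mcar M \<Longrightarrow> mact M g x \<in> mcar M"
  unfolding qg_module_def by blast
lemma act_add: "qg_module G M \<Longrightarrow> g \<in> carrier G \<Longrightarrow> x \<in> mcar M \<Longrightarrow> y \<in> mcar M \<Longrightarrow>
   mact M g (madd M x y) = madd M (mact M g x) (mact M g y)"
  unfolding qg_module_def by blast
lemma act_smul: "qg_module G M \<Longrightarrow> g \<in> carrier G \<Longrightarrow> x \<in> mcar M \<Longrightarrow>
   mact M g (msmul M q x) = msmul M q (mact M g x)"
  unfolding qg_module_def by blast
lemma act_one: "qg_module G M \<Longrightarrow> x \<in> mcar M \<Longrightarrow> mact M \<one>\<^bsub>G\<^esub> x = x"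
  unfolding qg_module_def by blast
lemma act_mult: "qg_module G M \<Longrightarrow> g \<in> carrier G \<Longrightarrow> h \<in> carrier G \<Longrightarrow> x \<in> mcar M \<Longrightarrow>
   mact M (g \<otimes>\<^bsub>G\<^esub> h) x = mact M g (mact M h x)"
  unfolding qg_module_def by blast


section \<open>Coset functions\<close>

definition scl :: "rat \<Rightarrow> ('a \<Rightarrow> rat) \<Rightarrow> ('a \<Rightarrow> rat)" where
  "scl q f = (\<lambda>x. q * f x)"

lemma scl_plus: "scl q (a + b) = scl q a + scl q b"
  by (simp add: scl_def fun_eq_iff algebra_simps)
lemma scl_minus: "scl q (a - b) = scl q a - scl q b"
  by (simp add: scl_def fun_eq_iff algebra_simps)
lemma scl_0[simp]: "scl 0 f = 0"
  by (simp add: scl_def fun_eq_iff)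
lemma scl_1[simp]: "scl 1 f = f"
  by (simp add: scl_def fun_eq_iff)
lemma minus_scl: "a - b = a + scl (-1) b"
  by (simp add: scl_def fun_eq_iff)

locale cs = group +
  fixes K :: "'g set"
  assumes sgK: "subgroup K G"
begin

lemma K_sub: "K \<subseteq> carrier G" using sgK subgroup.subset by blast

lemma lc_mem: "x \<in> carrier G \<Longrightarrow> x <# K \<in> lcosets K"
  unfolding LCOSETS_def by blast

lemma lc_cases: "X \<in> lcosets K \<Longrightarrow> \<exists>x\<in>carrier G. X = x <# K"
  unfolding LCOSETS_def by blast

lemma K_lc: "K \<in> lcosets K"
  using lc_mem[of "\<one>"] lcos_mult_one[OF K_sub] by simp

lemma lc_mult: "g \<in> carrier G \<Longrightarrow> x \<in> carrier G \<Longrightarrow> g <# (x <# K) = (g \<otimes> x) <# K"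
  using lcos_m_assoc K_sub by blast

lemma lc_act: "g \<in> carrier G \<Longrightarrow> X \<in> lcosets K \<Longrightarrow> g <# X \<in> lcosets K"
  using lc_cases lc_mult lc_mem by (metis m_closed)

lemma act_at: "g \<in> carrier G \<Longrightarrow> x \<in> carrier G \<Longrightarrow>
   coset_act G K g \<alpha> (x <# K) = \<alpha> ((inv g \<otimes> x) <# K)"
  unfolding coset_act_def using lc_mem lc_mult by simp

lemma act_funs[simp]: "coset_act G K g \<alpha> \<in> coset_funs G K"
  unfolding coset_act_def coset_funs_def by simp

lemma act_comp:
  assumes "\<alpha> \<in> coset_funs G K" "g \<in> carrier G" "h \<in> carrier G"
  shows "coset_act G K (g \<otimes> h) \<alpha> = coset_act G K g (coset_act G K h \<alpha>)"
proof
  fix X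
  show "coset_act G K (g \<otimes> h) \<alpha> X = coset_act G K g (coset_act G K h \<alpha>) X"
  proof (cases "X \<in> lcosets K")
    case True
    then obtain x where x: "x \<in> carrier G" "X = x <# K" using lc_cases by blast
    have "coset_act G K (g \<otimes> h) \<alpha> X = \<alpha> ((inv (g \<otimes> h) \<otimes> x) <# K)"
      using x assms act_at by simp
    also have "\<dots> = \<alpha> ((inv h \<otimes> (inv g \<otimes> x)) <# K)"
      using assms x by (simp add: inv_mult_group m_assoc)
    also have "\<dots> = coset_act G K g (coset_act G K h \<alpha>) X"
      using x assms act_at by simp
    finally show ?thesis .
  next
    case False
    then show ?thesis unfolding coset_act_def by simp
  qed
qed

lemma act_one_f:
  assumes "\<alpha> \<in> coset_funs G K"
  shows "coset_act G K \<one> \<alpha> = \<alpha>"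
proof
  fix X
  show "coset_act G K \<one> \<alpha> X = \<alpha> X"
  proof (cases "X \<in> lcosets K")
    case True
    then obtain x where x: "x \<in> carrier G" "X = x <# K" using lc_cases by blast
    then show ?thesis using act_at[of "\<one>" x \<alpha>] by simp
  next
    case False
    then show ?thesis using assms unfolding coset_act_def coset_funs_def by simp
  qed
qed

lemma act_plus: "coset_act G K g (\<alpha> + \<beta>) = coset_act G K g \<alpha> + coset_act G K g \<beta>"
  unfolding coset_act_def by (auto simp: fun_eq_iff)
lemma act_minus: "coset_act G K g (\<alpha> - \<beta>) = coset_act G K g \<alpha> - coset_act G K g \<beta>"
  unfolding coset_act_def by (auto simp: fun_eq_iff)
lemma act_scl: "coset_act G K g (scl q \<alpha>) = scl q (coset_act G K g \<alpha>)"
  unfolding coset_act_def scl_def by (auto simp: fun_eq_iff)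
lemma act_zero[simp]: "coset_act G K g 0 = 0"
  unfolding coset_act_def by (auto simp: fun_eq_iff)

lemma funs_plus: "\<alpha> \<in> coset_funs G K \<Longrightarrow> \<beta> \<in> coset_funs G K \<Longrightarrow> \<alpha> + \<beta> \<in> coset_funs G K"
  unfolding coset_funs_def by simp
lemma funs_minus: "\<alpha> \<in> coset_funs G K \<Longrightarrow> \<beta> \<in> coset_funs G K \<Longrightarrow> \<alpha> - \<beta> \<in> coset_funs G K"
  unfolding coset_funs_def by simp
lemma funs_scl: "\<alpha> \<in> coset_funs G K \<Longrightarrow> scl q \<alpha> \<in> coset_funs G K"
  unfolding coset_funs_def scl_def by simp
lemma funs_zero[simp]: "0 \<in> coset_funs G K"
  unfolding coset_funs_def by simp

lemma const_inv:
  assumes "\<alpha> \<in> const_coset_funs G K" "g \<in> carrier G"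
  shows "coset_act G K g \<alpha> = \<alpha>"
proof
  fix X
  obtain c where c: "\<forall>x\<in>lcosets K. \<alpha> x = c" "\<alpha> \<in> coset_funs G K"
    using assms unfolding const_coset_funs_def by blast
  show "coset_act G K g \<alpha> X = \<alpha> X"
  proof (cases "X \<in> lcosets K")
    case True
    then show ?thesis using c lc_act[OF _ True, of "inv g"] assms(2)
      unfolding coset_act_def by simp
  next
    case False
    then show ?thesis using c unfolding coset_act_def coset_funs_def by simp
  qed
qed

lemma inv_const:
  assumes "\<alpha> \<in> coset_funs G K" "\<forall>g\<in>carrier G. coset_act G K g \<alpha> = \<alpha>"
  shows "\<alpha> \<in> const_coset_funs G K"
proof -
  have "\<forall>X\<in>lcosets K. \<alpha> X = \<alpha> K"
  proof
    fix X assume "X \<in> lcosets K"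
    then obtain x where x: "x \<in> carrier G" "X = x <# K" using lc_cases by blast
    have "\<alpha> X = coset_act G K x \<alpha> X" using assms x by simp
    also have "\<dots> = \<alpha> K" using act_at[of x x \<alpha>] x lcos_mult_one[OF K_sub] by simp
    finally show "\<alpha> X = \<alpha> K" .
  qed
  then show ?thesis using assms unfolding const_coset_funs_def by blast
qed

lemma Mc_iff: "\<alpha> \<in> mcar (QGK G K) \<longleftrightarrow> \<alpha> \<in> coset_funs G K \<and> finite {x. \<alpha> x \<noteq> 0}"
  unfolding QGK_def almost_equal_def by simp

lemma Mc_plus: "\<alpha> \<in> mcar (QGK G K) \<Longrightarrow> \<beta> \<in> mcar (QGK G K) \<Longrightarrow> \<alpha> + \<beta> \<in> mcar (QGK G K)"
  unfolding Mc_iff using funs_plus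
  by (auto elim!: rev_finite_subset[OF finite_UnI[of "{x. \<alpha> x \<noteq> 0}" "{x. \<beta> x \<noteq> 0}"]])
lemma Mc_minus: "\<alpha> \<in> mcar (QGK G K) \<Longrightarrow> \<beta> \<in> mcar (QGK G K) \<Longrightarrow> \<alpha> - \<beta> \<in> mcar (QGK G K)"
  unfolding Mc_iff using funs_minus
  by (auto elim!: rev_finite_subset[OF finite_UnI[of "{x. \<alpha> x \<noteq> 0}" "{x. \<beta> x \<noteq> 0}"]])
lemma Mc_scl: "\<alpha> \<in> mcar (QGK G K) \<Longrightarrow> scl q \<alpha> \<in> mcar (QGK G K)"
  unfolding Mc_iff using funs_scl
  by (auto simp: scl_def elim!: rev_finite_subset)
lemma Mc_scl': "\<alpha> \<in> mcar (QGK G K) \<Longrightarrow> (\<lambda>x. q * \<alpha> x) \<in> mcar (QGK G K)"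
  using Mc_scl unfolding scl_def .
lemma Mc_zero[simp]: "0 \<in> mcar (QGK G K)"
  unfolding Mc_iff by simp
lemma Mc_funs: "\<alpha> \<in> mcar (QGK G K) \<Longrightarrow> \<alpha> \<in> coset_funs G K"
  unfolding Mc_iff by simp

lemma Mc_sum: "finite S \<Longrightarrow> (\<And>i. i \<in> S \<Longrightarrow> f i \<in> mcar (QGK G K)) \<Longrightarrow>
   (\<lambda>x. \<Sum>i\<in>S. f i x) \<in> mcar (QGK G K)"
proof (induction S rule: finite_induct)
  case empty
  then show ?case using Mc_zero by (simp add: zero_fun_def)
next
  case (insert a F)
  have "(\<lambda>x. \<Sum>i\<in>insert a F. f i x) = f a + (\<lambda>x. \<Sum>i\<in>F. f i x)"
    using insert by (simp add: fun_eq_iff)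
  then show ?case using insert Mc_plus by simp
qed

lemma QGK_ops: "madd (QGK G K) = (+)" "msmul (QGK G K) = scl" "mzero (QGK G K) = 0"
    "mact (QGK G K) = coset_act G K"
  unfolding QGK_def scl_def by (auto simp: fun_eq_iff)

end


lemma translate_open:
  assumes tg: "topological_group G T" and s: "s \<in> carrier G" and U: "openin T U" "U \<subseteq> carrier G"
  shows "openin T (s <#\<^bsub>G\<^esub> U)"
proof -
  interpret group G using tg unfolding topological_group_def by blast
  have top: "topspace T = carrier G" using tg unfolding topological_group_def by blast
  have cm: "continuous_map (prod_topology T T) T (\<lambda>(x, y). x \<otimes>\<^bsub>G\<^esub> y)"
    using tg unfolding topological_group_def by blast
  have "continuous_map T (prod_topology T T) (\<lambda>x. (inv\<^bsub>G\<^esub> s, x))"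
    by (intro continuous_map_pairedI continuous_map_const[THEN iffD2] continuous_map_id[unfolded id_def])
       (simp add: top s)
  from continuous_map_compose[OF this cm]
  have c: "continuous_map T T (\<lambda>x. inv\<^bsub>G\<^esub> s \<otimes>\<^bsub>G\<^esub> x)" by (simp add: o_def)
  have eq: "s <#\<^bsub>G\<^esub> U = {x \<in> topspace T. inv\<^bsub>G\<^esub> s \<otimes>\<^bsub>G\<^esub> x \<in> U}"
  proof safe
    fix x assume "x \<in> s <#\<^bsub>G\<^esub> U"
    then obtain u where u: "u \<in> U" "x = s \<otimes>\<^bsub>G\<^esub> u" unfolding l_coset_def by blast
    then show "x \<in> topspace T" using U s top by auto
    show "inv\<^bsub>G\<^esub> s \<otimes>\<^bsub>G\<^esub> x \<in> U" using u U s by (auto simp: m_assoc[symmetric])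
  next
    fix x assume x: "x \<in> topspace T" "inv\<^bsub>G\<^esub> s \<otimes>\<^bsub>G\<^esub> x \<in> U"
    then have "x = s \<otimes>\<^bsub>G\<^esub> (inv\<^bsub>G\<^esub> s \<otimes>\<^bsub>G\<^esub> x)" using s top by (simp add: m_assoc[symmetric])
    then show "x \<in> s <#\<^bsub>G\<^esub> U" using x unfolding l_coset_def by blast
  qed
  show ?thesis unfolding eq by (rule openin_continuous_map_preimage[OF c U(1)])
qed

lemma open_by_subgroup:
  assumes tg: "topological_group G T" and U: "openin T U" "\<one>\<^bsub>G\<^esub> \<in> U"
    and S: "S \<subseteq> carrier G" "\<forall>s\<in>S. \<forall>u\<in>U. s \<otimes>\<^bsub>G\<^esub> u \<in> S"
  shows "openin T S"
proof -
  interpret group G using tg unfolding topological_group_def by blast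
  have top: "topspace T = carrier G" using tg unfolding topological_group_def by blast
  have Uc: "U \<subseteq> carrier G" using openin_subset[OF U(1)] top by simp
  have "S = (\<Union>s\<in>S. s <#\<^bsub>G\<^esub> U)"
  proof safe
    fix s assume "s \<in> S"
    then have "s = s \<otimes>\<^bsub>G\<^esub> \<one>\<^bsub>G\<^esub>" "s \<in> carrier G" using S by auto
    then show "s \<in> (\<Union>s\<in>S. s <#\<^bsub>G\<^esub> U)" using \<open>s \<in> S\<close> U unfolding l_coset_def by blast
  next
    fix x s assume "s \<in> S" "x \<in> s <#\<^bsub>G\<^esub> U"
    then show "x \<in> S" using S unfolding l_coset_def by blast
  qed
  moreover have "openin T (\<Union>s\<in>S. s <#\<^bsub>G\<^esub> U)"
    using translate_open[OF tg _ U(1) Uc] S by (intro openin_Union) auto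
  ultimately show ?thesis by simp
qed

section \<open>Transport of module structure\<close>

definition tmod :: "('x \<Rightarrow> 'm) \<Rightarrow> ('g, 'x) qg_module \<Rightarrow> ('g, 'm) qg_module" where
  "tmod j N = \<lparr>mcar = j ` mcar N,
     madd = (\<lambda>a b. j (madd N (inv_into (mcar N) j a) (inv_into (mcar N) j b))),
     mzero = j (mzero N),
     msmul = (\<lambda>q a. j (msmul N q (inv_into (mcar N) j a))),
     mact = (\<lambda>g a. j (mact N g (inv_into (mcar N) j a)))\<rparr>"

lemma tmod_car: "mcar (tmod j N) = j ` mcar N"
  by (simp add: tmod_def)
lemma tmod_add: "inj_on j (mcar N) \<Longrightarrow> x \<in> mcar N \<Longrightarrow> y \<in> mcar N \<Longrightarrow>
   madd (tmod j N) (j x) (j y) = j (madd N x y)"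
  by (simp add: tmod_def)
lemma tmod_zero: "mzero (tmod j N) = j (mzero N)"
  by (simp add: tmod_def)
lemma tmod_smul: "inj_on j (mcar N) \<Longrightarrow> x \<in> mcar N \<Longrightarrow> msmul (tmod j N) q (j x) = j (msmul N q x)"
  by (simp add: tmod_def)
lemma tmod_act: "inj_on j (mcar N) \<Longrightarrow> x \<in> mcar N \<Longrightarrow> mact (tmod j N) g (j x) = j (mact N g x)"
  by (simp add: tmod_def)
lemmas tmod_simps = tmod_car tmod_add tmod_zero tmod_smul tmod_act

lemma tmod_discrete:
  assumes inj: "inj_on j (mcar N)" and D: "discrete_module G T N"
  shows "discrete_module G T (tmod j N)"
proof -
  have Q: "qg_module G N" using D unfolding discrete_module_def by blast
  interpret N: rvs N using qg_rvs[OF Q] .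
  let ?C = "mcar N"
  note S = tmod_car tmod_add[OF inj] tmod_zero tmod_smul[OF inj] tmod_act[OF inj]
  have rv: "rat_vector_space (tmod j N)"
    unfolding rat_vector_space_def
  proof (intro conjI)
    show "mzero (tmod j N) \<in> mcar (tmod j N)" by (simp add: S)
    show "\<forall>x\<in>mcar (tmod j N). \<forall>y\<in>mcar (tmod j N). madd (tmod j N) x y \<in> mcar (tmod j N)"
      by (auto simp: S)
    show "\<forall>q. \<forall>x\<in>mcar (tmod j N). msmul (tmod j N) q x \<in> mcar (tmod j N)"
      by (auto simp: S)
    show "\<forall>x\<in>mcar (tmod j N). \<forall>y\<in>mcar (tmod j N). \<forall>z\<in>mcar (tmod j N).
        madd (tmod j N) (madd (tmod j N) x y) z = madd (tmod j N) x (madd (tmod j N) y z)"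
      by (auto simp: S N.add_assoc)
    show "\<forall>x\<in>mcar (tmod j N). \<forall>y\<in>mcar (tmod j N). madd (tmod j N) x y = madd (tmod j N) y x"
      by (auto simp: S intro!: arg_cong[where f=j] N.add_comm)
    show "\<forall>x\<in>mcar (tmod j N). madd (tmod j N) (mzero (tmod j N)) x = x"
      by (auto simp: S)
    show "\<forall>x\<in>mcar (tmod j N). \<exists>y\<in>mcar (tmod j N). madd (tmod j N) x y = mzero (tmod j N)"
    proof
      fix a assume "a \<in> mcar (tmod j N)"
      then obtain x where x: "x \<in> ?C" "a = j x" by (auto simp: S)
      show "\<exists>y\<in>mcar (tmod j N). madd (tmod j N) a y = mzero (tmod j N)"
        by (rule bexI[of _ "j (msmul N (-1) x)"]) (use x in \<open>auto simp: S\<close>)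
    qed
    show "\<forall>q. \<forall>x\<in>mcar (tmod j N). \<forall>y\<in>mcar (tmod j N).
       msmul (tmod j N) q (madd (tmod j N) x y) = madd (tmod j N) (msmul (tmod j N) q x) (msmul (tmod j N) q y)"
      by (auto simp: S N.smul_add)
    show "\<forall>p q. \<forall>x\<in>mcar (tmod j N). msmul (tmod j N) (p + q) x = madd (tmod j N) (msmul (tmod j N) p x) (msmul (tmod j N) q x)"
      by (auto simp: S N.add_smul)
    show "\<forall>p q. \<forall>x\<in>mcar (tmod j N). msmul (tmod j N) (p * q) x = msmul (tmod j N) p (msmul (tmod j N) q x)"
      by (auto simp: S N.smul_smul)
    show "\<forall>x\<in>mcar (tmod j N). msmul (tmod j N) 1 x = x"
      by (auto simp: S)
  qed
  have qg: "qg_module G (tmod j N)"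
    unfolding qg_module_def
  proof (intro conjI rv)
    show "\<forall>g\<in>carrier G. \<forall>x\<in>mcar (tmod j N). mact (tmod j N) g x \<in> mcar (tmod j N)"
      using act_closed[OF Q] by (auto simp: S)
    show "\<forall>g\<in>carrier G. \<forall>x\<in>mcar (tmod j N). \<forall>y\<in>mcar (tmod j N).
       mact (tmod j N) g (madd (tmod j N) x y) = madd (tmod j N) (mact (tmod j N) g x) (mact (tmod j N) g y)"
      using act_closed[OF Q] by (auto simp: S act_add[OF Q])
    show "\<forall>g\<in>carrier G. \<forall>q. \<forall>x\<in>mcar (tmod j N). mact (tmod j N) g (msmul (tmod j N) q x) = msmul (tmod j N) q (mact (tmod j N) g x)"
      using act_closed[OF Q] by (auto simp: S act_smul[OF Q])
    show "\<forall>x\<in>mcar (tmod j N). mact (tmod j N) \<one>\<^bsub>G\<^esub> x = x"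
      by (auto simp: S act_one[OF Q])
    show "\<forall>g\<in>carrier G. \<forall>h\<in>carrier G. \<forall>x\<in>mcar (tmod j N). mact (tmod j N) (g \<otimes>\<^bsub>G\<^esub> h) x = mact (tmod j N) g (mact (tmod j N) h x)"
      using act_closed[OF Q] by (auto simp: S act_mult[OF Q])
  qed
  have "openin T {g \<in> carrier G. mact (tmod j N) g a = a}" if a: "a \<in> mcar (tmod j N)" for a
  proof -
    obtain x where x: "x \<in> ?C" "a = j x" using a by (auto simp: S)
    have "{g \<in> carrier G. mact (tmod j N) g a = a} = {g \<in> carrier G. mact N g x = x}"
      using x inj act_closed[OF Q] by (auto simp: S inj_on_eq_iff)
    then show ?thesis using D x unfolding discrete_module_def by simp
  qed
  then show ?thesis using qg unfolding discrete_module_def by blast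
qed

lemma tmod_hom_from:
  assumes inj: "inj_on j (mcar N)" and Q: "qg_module G N" and h: "module_hom G N P \<phi>"
  shows "module_hom G (tmod j N) P (\<lambda>a. \<phi> (inv_into (mcar N) j a))"
proof -
  interpret N: rvs N using qg_rvs[OF Q] .
  show ?thesis unfolding module_hom_def tmod_car
  proof (intro conjI ballI allI, goal_cases)
    case (1 a) then show ?case using h inj unfolding module_hom_def by auto
  next
    case (2 a b)
    then obtain x y where "x \<in> mcar N" "y \<in> mcar N" "a = j x" "b = j y" by auto
    then show ?case using h inj by (simp add: tmod_simps hom_add)
  next
    case (3 q a)
    then obtain x where "x \<in> mcar N" "a = j x" by auto
    then show ?case using h inj by (simp add: tmod_simps hom_smul)
  next
    case (4 g a)
    then obtain x where "x \<in> mcar N" "a = j x" by auto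
    then show ?case using h inj 4 by (simp add: tmod_simps hom_act act_closed[OF Q])
  qed
qed

lemma tmod_hom_to:
  assumes inj: "inj_on j (mcar N)" and Q: "qg_module G N" and h: "module_hom G (tmod j N) P h"
  shows "module_hom G N P (\<lambda>x. h (j x))"
proof -
  interpret N: rvs N using qg_rvs[OF Q] .
  note S = tmod_car tmod_add[OF inj] tmod_zero tmod_smul[OF inj] tmod_act[OF inj]
  show ?thesis unfolding module_hom_def
  proof (intro conjI ballI allI)
    fix x assume x: "x \<in> mcar N"
    show "h (j x) \<in> mcar P" using h x unfolding module_hom_def tmod_car by auto
    fix q show "h (j (msmul N q x)) = msmul P q (h (j x))"
      using h x S unfolding module_hom_def by (metis imageI)
  next
    fix x y assume x: "x \<in> mcar N" and y: "y \<in> mcar N"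
    show "h (j (madd N x y)) = madd P (h (j x)) (h (j y))"
      using h x y S unfolding module_hom_def by (metis imageI)
  next
    fix g x assume g: "g \<in> carrier G" and x: "x \<in> mcar N"
    show "h (j (mact N g x)) = mact P g (h (j x))"
      using h x g S unfolding module_hom_def by (metis imageI)
  qed
qed

lemma sub_discrete:
  assumes D: "discrete_module G T N" and S: "S \<subseteq> mcar N" "mzero N \<in> S"
    "\<And>x y. x \<in> S \<Longrightarrow> y \<in> S \<Longrightarrow> madd N x y \<in> S"
    "\<And>q x. x \<in> S \<Longrightarrow> msmul N q x \<in> S"
    "\<And>g x. g \<in> carrier G \<Longrightarrow> x \<in> S \<Longrightarrow> mact N g x \<in> S"
  shows "discrete_module G T (N\<lparr>mcar := S\<rparr>)"
proof -
  have Q: "qg_module G N" using D unfolding discrete_module_def by blast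
  interpret N: rvs N using qg_rvs[OF Q] .
  have sub: "x \<in> S \<Longrightarrow> x \<in> mcar N" for x using S by blast
  have e: "mcar (N\<lparr>mcar := S\<rparr>) = S" "madd (N\<lparr>mcar := S\<rparr>) = madd N"
    "msmul (N\<lparr>mcar := S\<rparr>) = msmul N" "mzero (N\<lparr>mcar := S\<rparr>) = mzero N"
    "mact (N\<lparr>mcar := S\<rparr>) = mact N" by simp_all
  have rv: "rat_vector_space (N\<lparr>mcar := S\<rparr>)"
    unfolding rat_vector_space_def
  proof (simp only: e, intro conjI ballI allI)
    fix x assume x: "x \<in> S"
    show "\<exists>y\<in>S. madd N x y = mzero N"
      by (rule bexI[of _ "msmul N (-1) x"]) (use x sub S in auto)
  qed (use S sub in \<open>auto simp: N.add_assoc N.smul_add N.add_smul N.smul_smul intro: N.add_comm\<close>)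
  have qg: "qg_module G (N\<lparr>mcar := S\<rparr>)"
    unfolding qg_module_def
    by (simp only: e, intro conjI ballI allI rv)
       (use S sub in \<open>auto simp: act_add[OF Q] act_smul[OF Q] act_one[OF Q] act_mult[OF Q]\<close>)
  show ?thesis using qg D sub unfolding discrete_module_def by simp
qed


locale setting = cs +
  fixes T :: "'a topology" and I0 I1 I2 :: "('a, 'm) qg_module"
    and \<epsilon> :: "('a set \<Rightarrow> rat) \<Rightarrow> 'm" and d0 d1 :: "'m \<Rightarrow> 'm"
  assumes tdlc: "tdlc_group G T" and opK: "openin T K" and cpK: "compactin T K"
    and res: "injective_resolution_1 G T (QGK G K) I0 I1 I2 \<epsilon> d0 d1"
begin

abbreviation "Mc \<equiv> mcar (QGK G K)"

lemma tg: "topological_group G T" using tdlc unfolding tdlc_group_def by blast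
lemma DM: "discrete_module G T (QGK G K)" using res unfolding injective_resolution_1_def by blast
lemma QM: "qg_module G (QGK G K)" using DM unfolding discrete_module_def by blast
lemma injI0: "injective_discrete_module G T I0" using res unfolding injective_resolution_1_def by blast
lemma DI0: "discrete_module G T I0" using injI0 unfolding injective_discrete_module_def by blast
lemma QI0: "qg_module G I0" using DI0 unfolding discrete_module_def by blast
lemma QI1: "qg_module G I1"
  using res unfolding injective_resolution_1_def injective_discrete_module_def discrete_module_def by blast
lemma QI2: "qg_module G I2"
  using res unfolding injective_resolution_1_def injective_discrete_module_def discrete_module_def by blast
lemma he: "module_hom G (QGK G K) I0 \<epsilon>" using res unfolding injective_resolution_1_def by blast
lemma hd0: "module_hom G I0 I1 d0" using res unfolding injective_resolution_1_def by blast
lemma hd1: "module_hom G I1 I2 d1" using res unfolding injective_resolution_1_def by blast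
lemma inje: "inj_on \<epsilon> Mc" using res unfolding injective_resolution_1_def by blast
lemma kerd0: "\<epsilon> ` Mc = {x \<in> mcar I0. d0 x = mzero I1}" using res unfolding injective_resolution_1_def by blast
lemma kerd1: "d0 ` mcar I0 = {x \<in> mcar I1. d1 x = mzero I2}" using res unfolding injective_resolution_1_def by blast

sublocale I0: rvs I0 using qg_rvs[OF QI0] .
sublocale I1: rvs I1 using qg_rvs[OF QI1] .
sublocale I2: rvs I2 using qg_rvs[OF QI2] .
lemma rvsM: "rvs (QGK G K)" using qg_rvs[OF QM] .

lemma e_closed[simp]: "\<alpha> \<in> Mc \<Longrightarrow> \<epsilon> \<alpha> \<in> mcar I0" using hom_closed[OF he] .
lemma e_plus: "\<alpha> \<in> Mc \<Longrightarrow> \<beta> \<in> Mc \<Longrightarrow> \<epsilon> (\<alpha> + \<beta>) = madd I0 (\<epsilon> \<alpha>) (\<epsilon> \<beta>)"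
  using hom_add[OF he] by (simp add: QGK_ops)
lemma e_scl: "\<alpha> \<in> Mc \<Longrightarrow> \<epsilon> (scl q \<alpha>) = msmul I0 q (\<epsilon> \<alpha>)"
  using hom_smul[OF he] by (simp add: QGK_ops)
lemma e_act: "g \<in> carrier G \<Longrightarrow> \<alpha> \<in> Mc \<Longrightarrow> \<epsilon> (coset_act G K g \<alpha>) = mact I0 g (\<epsilon> \<alpha>)"
  using hom_act[OF he] by (simp add: QGK_ops)
lemma e_zero[simp]: "\<epsilon> 0 = mzero I0"
  using hom_zero[OF rvsM _ he] I0.rvs_axioms by (simp add: QGK_ops)
lemma d0_e[simp]: "\<alpha> \<in> Mc \<Longrightarrow> d0 (\<epsilon> \<alpha>) = mzero I1"
  using kerd0 by blast
lemma e_minus: "\<alpha> \<in> Mc \<Longrightarrow> \<beta> \<in> Mc \<Longrightarrow> \<epsilon> (\<alpha> - \<beta>) = madd I0 (\<epsilon> \<alpha>) (msmul I0 (-1) (\<epsilon> \<beta>))"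
proof -
  assume a: "\<alpha> \<in> Mc" and b: "\<beta> \<in> Mc"
  show ?thesis unfolding minus_scl using a b by (simp add: e_plus e_scl Mc_scl)
qed
lemma e_inj: "\<alpha> \<in> Mc \<Longrightarrow> \<beta> \<in> Mc \<Longrightarrow> \<epsilon> \<alpha> = \<epsilon> \<beta> \<Longrightarrow> \<alpha> = \<beta>"
  using inje by (meson inj_onD)
lemma Mc_act: "g \<in> carrier G \<Longrightarrow> \<alpha> \<in> Mc \<Longrightarrow> coset_act G K g \<alpha> \<in> Mc"
  using act_closed[OF QM] by (simp add: QGK_ops)

lemma d0_closed[simp]: "y \<in> mcar I0 \<Longrightarrow> d0 y \<in> mcar I1" using hom_closed[OF hd0] .
lemma d0_add: "x \<in> mcar I0 \<Longrightarrow> y \<in> mcar I0 \<Longrightarrow> d0 (madd I0 x y) = madd I1 (d0 x) (d0 y)"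
  using hom_add[OF hd0] .
lemma d0_smul: "x \<in> mcar I0 \<Longrightarrow> d0 (msmul I0 q x) = msmul I1 q (d0 x)"
  using hom_smul[OF hd0] .
lemma d0_act: "g \<in> carrier G \<Longrightarrow> x \<in> mcar I0 \<Longrightarrow> d0 (mact I0 g x) = mact I1 g (d0 x)"
  using hom_act[OF hd0] .

lemma I0_act_closed[simp]: "g \<in> carrier G \<Longrightarrow> x \<in> mcar I0 \<Longrightarrow> mact I0 g x \<in> mcar I0"
  using act_closed[OF QI0] .
lemma I1_act_closed[simp]: "g \<in> carrier G \<Longrightarrow> x \<in> mcar I1 \<Longrightarrow> mact I1 g x \<in> mcar I1"
  using act_closed[OF QI1] .

lemma AInv_funs: "\<alpha> \<in> AInv G K \<Longrightarrow> \<alpha> \<in> coset_funs G K"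
  unfolding AInv_def by blast
lemma AInv_K: "\<alpha> \<in> AInv G K \<Longrightarrow> k \<in> K \<Longrightarrow> coset_act G K k \<alpha> = \<alpha>"
  unfolding AInv_def by blast
lemma AInv_diff: "\<alpha> \<in> AInv G K \<Longrightarrow> g \<in> carrier G \<Longrightarrow> coset_act G K g \<alpha> - \<alpha> \<in> Mc"
  unfolding AInv_def Mc_iff almost_equal_def by (auto intro: funs_minus)

lemma AInv_I:
  assumes "\<alpha> \<in> coset_funs G K" "\<And>g. g \<in> carrier G \<Longrightarrow> coset_act G K g \<alpha> - \<alpha> \<in> Mc"
    "\<And>k. k \<in> K \<Longrightarrow> coset_act G K k \<alpha> = \<alpha>"
  shows "\<alpha> \<in> AInv G K"
  using assms unfolding AInv_def Mc_iff almost_equal_def by auto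

lemma AInv_plus: "\<alpha> \<in> AInv G K \<Longrightarrow> \<beta> \<in> AInv G K \<Longrightarrow> \<alpha> + \<beta> \<in> AInv G K"
proof (rule AInv_I)
  fix g assume a: "\<alpha> \<in> AInv G K" "\<beta> \<in> AInv G K" "g \<in> carrier G"
  have "coset_act G K g (\<alpha> + \<beta>) - (\<alpha> + \<beta>) = (coset_act G K g \<alpha> - \<alpha>) + (coset_act G K g \<beta> - \<beta>)"
    by (simp add: act_plus)
  then show "coset_act G K g (\<alpha> + \<beta>) - (\<alpha> + \<beta>) \<in> Mc" using a AInv_diff Mc_plus by metis
qed (auto simp: AInv_funs funs_plus act_plus AInv_K)

lemma AInv_scl: "\<alpha> \<in> AInv G K \<Longrightarrow> scl q \<alpha> \<in> AInv G K"
proof (rule AInv_I)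
  fix g assume a: "\<alpha> \<in> AInv G K" "g \<in> carrier G"
  have "coset_act G K g (scl q \<alpha>) - scl q \<alpha> = scl q (coset_act G K g \<alpha> - \<alpha>)"
    by (simp only: act_scl scl_minus)
  then show "coset_act G K g (scl q \<alpha>) - scl q \<alpha> \<in> Mc" using a AInv_diff Mc_scl by metis
qed (auto simp: AInv_funs funs_scl act_scl AInv_K)

lemma AInv_zero[simp]: "0 \<in> AInv G K"
  by (rule AInv_I) auto

lemma AInv_minus: "\<alpha> \<in> AInv G K \<Longrightarrow> \<beta> \<in> AInv G K \<Longrightarrow> \<alpha> - \<beta> \<in> AInv G K"
  unfolding minus_scl by (intro AInv_plus AInv_scl)

definition Wd :: "('a set \<Rightarrow> rat) set" where
  "Wd = {(\<lambda>x. c x + \<beta> x) |c \<beta>. c \<in> const_coset_funs G K \<and> \<beta> \<in> QGK_fixed G K}"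

lemma Wd_iff: "w \<in> Wd \<longleftrightarrow> (\<exists>c \<beta>. c \<in> const_coset_funs G K \<and> \<beta> \<in> QGK_fixed G K \<and> w = c + \<beta>)"
  unfolding Wd_def by (auto simp: plus_fun_def)

lemma const_plus: "c \<in> const_coset_funs G K \<Longrightarrow> d \<in> const_coset_funs G K \<Longrightarrow> c + d \<in> const_coset_funs G K"
  unfolding const_coset_funs_def using funs_plus by auto
lemma const_scl: "c \<in> const_coset_funs G K \<Longrightarrow> scl q c \<in> const_coset_funs G K"
  unfolding const_coset_funs_def using funs_scl by (auto simp: scl_def)
lemma const_zero: "0 \<in> const_coset_funs G K"
  unfolding const_coset_funs_def by auto
lemma fixed_iff: "\<beta> \<in> QGK_fixed G K \<longleftrightarrow> \<beta> \<in> Mc \<and> (\<forall>k\<in>K. coset_act G K k \<beta> = \<beta>)"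
  unfolding QGK_fixed_def by simp
lemma fixed_plus: "\<beta> \<in> QGK_fixed G K \<Longrightarrow> \<gamma> \<in> QGK_fixed G K \<Longrightarrow> \<beta> + \<gamma> \<in> QGK_fixed G K"
  unfolding fixed_iff using Mc_plus by (simp add: act_plus)
lemma fixed_scl: "\<beta> \<in> QGK_fixed G K \<Longrightarrow> scl q \<beta> \<in> QGK_fixed G K"
  unfolding fixed_iff using Mc_scl by (simp add: act_scl)
lemma fixed_zero: "0 \<in> QGK_fixed G K"
  unfolding fixed_iff by simp

lemma Wd_plus: "v \<in> Wd \<Longrightarrow> w \<in> Wd \<Longrightarrow> v + w \<in> Wd"
  unfolding Wd_iff
proof (elim exE conjE)
  fix c \<beta> d \<gamma> assume *: "c \<in> const_coset_funs G K" "\<beta> \<in> QGK_fixed G K" "v = c + \<beta>"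
    "d \<in> const_coset_funs G K" "\<gamma> \<in> QGK_fixed G K" "w = d + \<gamma>"
  then show "\<exists>c \<beta>. c \<in> const_coset_funs G K \<and> \<beta> \<in> QGK_fixed G K \<and> v + w = c + \<beta>"
    by (intro exI[of _ "c + d"] exI[of _ "\<beta> + \<gamma>"]) (simp add: const_plus fixed_plus algebra_simps)
qed

lemma Wd_scl: "w \<in> Wd \<Longrightarrow> scl q w \<in> Wd"
  unfolding Wd_iff
proof (elim exE conjE)
  fix c \<beta> assume *: "c \<in> const_coset_funs G K" "\<beta> \<in> QGK_fixed G K" "w = c + \<beta>"
  then show "\<exists>c \<beta>. c \<in> const_coset_funs G K \<and> \<beta> \<in> QGK_fixed G K \<and> scl q w = c + \<beta>"
    by (intro exI[of _ "scl q c"] exI[of _ "scl q \<beta>"]) (simp add: const_scl fixed_scl scl_plus)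
qed

lemma Wd_zero: "0 \<in> Wd"
  unfolding Wd_iff using const_zero fixed_zero by force

lemma Wd_minus: "v \<in> Wd \<Longrightarrow> w \<in> Wd \<Longrightarrow> v - w \<in> Wd"
  unfolding minus_scl by (intro Wd_plus Wd_scl)

lemma const_AInv: "c \<in> const_coset_funs G K \<Longrightarrow> c \<in> AInv G K"
  by (rule AInv_I) (auto simp: const_inv const_coset_funs_def K_sub[THEN subsetD])

lemma fixed_AInv: "\<beta> \<in> QGK_fixed G K \<Longrightarrow> \<beta> \<in> AInv G K"
  by (rule AInv_I) (auto simp: fixed_iff Mc_funs Mc_act Mc_minus)

lemma Wd_AInv: "w \<in> Wd \<Longrightarrow> w \<in> AInv G K"
  unfolding Wd_iff using const_AInv fixed_AInv AInv_plus by blast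

end


context setting
begin

definition Rel :: "'m \<Rightarrow> ('a set \<Rightarrow> rat) \<Rightarrow> bool" where
  "Rel z \<alpha> \<longleftrightarrow> \<alpha> \<in> AInv G K \<and> (\<exists>y\<in>mcar I0. d0 y = z \<and>
     (\<forall>g\<in>carrier G. mact I0 g y = madd I0 (\<epsilon> (coset_act G K g \<alpha> - \<alpha>)) y))"

lemma Rel_plus:
  assumes "Rel z1 \<alpha>1" "Rel z2 \<alpha>2"
  shows "Rel (madd I1 z1 z2) (\<alpha>1 + \<alpha>2)"
proof -
  obtain y1 where y1: "y1 \<in> mcar I0" "d0 y1 = z1"
    "\<And>g. g \<in> carrier G \<Longrightarrow> mact I0 g y1 = madd I0 (\<epsilon> (coset_act G K g \<alpha>1 - \<alpha>1)) y1"
    using assms(1) unfolding Rel_def by blast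
  obtain y2 where y2: "y2 \<in> mcar I0" "d0 y2 = z2"
    "\<And>g. g \<in> carrier G \<Longrightarrow> mact I0 g y2 = madd I0 (\<epsilon> (coset_act G K g \<alpha>2 - \<alpha>2)) y2"
    using assms(2) unfolding Rel_def by blast
  have a: "\<alpha>1 \<in> AInv G K" "\<alpha>2 \<in> AInv G K" using assms unfolding Rel_def by auto
  have "mact I0 g (madd I0 y1 y2) = madd I0 (\<epsilon> (coset_act G K g (\<alpha>1 + \<alpha>2) - (\<alpha>1 + \<alpha>2))) (madd I0 y1 y2)"
    if g: "g \<in> carrier G" for g
  proof -
    have eq: "coset_act G K g (\<alpha>1 + \<alpha>2) - (\<alpha>1 + \<alpha>2) = (coset_act G K g \<alpha>1 - \<alpha>1) + (coset_act G K g \<alpha>2 - \<alpha>2)"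
      by (simp add: act_plus)
    have m: "coset_act G K g \<alpha>1 - \<alpha>1 \<in> Mc" "coset_act G K g \<alpha>2 - \<alpha>2 \<in> Mc" using a g AInv_diff by auto
    show ?thesis unfolding eq using m y1 y2 g
      by (simp add: act_add[OF QI0] e_plus I0.add_4)
  qed
  then show ?thesis unfolding Rel_def using a y1 y2
    by (intro conjI AInv_plus bexI[of _ "madd I0 y1 y2"]) (auto simp: d0_add)
qed

lemma Rel_scl:
  assumes "Rel z \<alpha>"
  shows "Rel (msmul I1 q z) (scl q \<alpha>)"
proof -
  obtain y where y: "y \<in> mcar I0" "d0 y = z"
    "\<And>g. g \<in> carrier G \<Longrightarrow> mact I0 g y = madd I0 (\<epsilon> (coset_act G K g \<alpha> - \<alpha>)) y"
    using assms(1) unfolding Rel_def by blast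
  have a: "\<alpha> \<in> AInv G K" using assms unfolding Rel_def by auto
  have "mact I0 g (msmul I0 q y) = madd I0 (\<epsilon> (coset_act G K g (scl q \<alpha>) - scl q \<alpha>)) (msmul I0 q y)"
    if g: "g \<in> carrier G" for g
  proof -
    have eq: "coset_act G K g (scl q \<alpha>) - scl q \<alpha> = scl q (coset_act G K g \<alpha> - \<alpha>)"
      by (simp only: act_scl scl_minus)
    have m: "coset_act G K g \<alpha> - \<alpha> \<in> Mc" using a g AInv_diff by auto
    show ?thesis unfolding eq using m y g
      by (simp add: act_smul[OF QI0] e_scl I0.smul_add)
  qed
  then show ?thesis unfolding Rel_def using a y
    by (intro conjI AInv_scl bexI[of _ "msmul I0 q y"]) (auto simp: d0_smul)
qed

lemma Rel_unique:
  assumes "Rel z \<alpha>" "Rel z \<alpha>'"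
  shows "\<alpha> - \<alpha>' \<in> Wd"
proof -
  obtain y where y: "y \<in> mcar I0" "d0 y = z"
    "\<And>g. g \<in> carrier G \<Longrightarrow> mact I0 g y = madd I0 (\<epsilon> (coset_act G K g \<alpha> - \<alpha>)) y"
    using assms(1) unfolding Rel_def by blast
  obtain y' where y': "y' \<in> mcar I0" "d0 y' = z"
    "\<And>g. g \<in> carrier G \<Longrightarrow> mact I0 g y' = madd I0 (\<epsilon> (coset_act G K g \<alpha>' - \<alpha>')) y'"
    using assms(2) unfolding Rel_def by blast
  have a: "\<alpha> \<in> AInv G K" "\<alpha>' \<in> AInv G K" using assms unfolding Rel_def by auto
  define u where "u = madd I0 y (msmul I0 (-1) y')"
  have u: "u \<in> mcar I0" unfolding u_def using y y' by simp
  have zc: "z \<in> mcar I1" using y by auto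
  have "d0 u = mzero I1" unfolding u_def using y y' zc by (simp add: d0_add d0_smul)
  then have "u \<in> \<epsilon> ` Mc" using kerd0 u by blast
  then obtain m where m: "m \<in> Mc" "\<epsilon> m = u" by blast
  define c where "c g = coset_act G K g \<alpha> - \<alpha>" for g
  define c' where "c' g = coset_act G K g \<alpha>' - \<alpha>'" for g
  have cM: "c g \<in> Mc" "c' g \<in> Mc" if "g \<in> carrier G" for g
    unfolding c_def c'_def using a that AInv_diff by auto
  have gm: "coset_act G K g m = c g - c' g + m" if g: "g \<in> carrier G" for g
  proof (rule e_inj)
    show "coset_act G K g m \<in> Mc" using Mc_act g m by blast
    show "c g - c' g + m \<in> Mc" using cM g m Mc_plus Mc_minus by blast
    have "\<epsilon> (coset_act G K g m) = mact I0 g u" using e_act g m by simp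
    also have "\<dots> = madd I0 (mact I0 g y) (msmul I0 (-1) (mact I0 g y'))"
      unfolding u_def using g y y' by (simp add: act_add[OF QI0] act_smul[OF QI0])
    also have "\<dots> = madd I0 (madd I0 (\<epsilon> (c g)) y) (madd I0 (msmul I0 (-1) (\<epsilon> (c' g))) (msmul I0 (-1) y'))"
      using y(3)[OF g] y'(3)[OF g] cM[OF g] y y' unfolding c_def c'_def by (simp add: I0.smul_add)
    also have "\<dots> = madd I0 (madd I0 (\<epsilon> (c g)) (msmul I0 (-1) (\<epsilon> (c' g)))) u"
      unfolding u_def using cM[OF g] y y' by (simp add: I0.add_4)
    also have "\<dots> = \<epsilon> (c g - c' g + m)"
      using cM[OF g] m by (simp add: e_plus e_minus Mc_minus)
    finally show "\<epsilon> (coset_act G K g m) = \<epsilon> (c g - c' g + m)" .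
  qed
  define \<delta> where "\<delta> = \<alpha> - \<alpha>' - m"
  have "\<delta> \<in> const_coset_funs G K"
  proof (rule inv_const)
    show "\<delta> \<in> coset_funs G K" unfolding \<delta>_def using a m AInv_funs Mc_funs funs_minus by blast
    show "\<forall>g\<in>carrier G. coset_act G K g \<delta> = \<delta>"
    proof
      fix g assume g: "g \<in> carrier G"
      have "coset_act G K g \<delta> = coset_act G K g \<alpha> - coset_act G K g \<alpha>' - coset_act G K g m"
        unfolding \<delta>_def by (simp add: act_minus)
      also have "\<dots> = \<delta>" unfolding gm[OF g] unfolding \<delta>_def c_def c'_def by (simp add: algebra_simps)
      finally show "coset_act G K g \<delta> = \<delta>" .
    qed
  qed
  moreover have "m \<in> QGK_fixed G K"
    unfolding fixed_iff
  proof (intro conjI ballI m)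
    fix k assume k: "k \<in> K"
    then have "k \<in> carrier G" using K_sub by blast
    then show "coset_act G K k m = m" using gm k a AInv_K unfolding c_def c'_def by simp
  qed
  moreover have "\<alpha> - \<alpha>' = \<delta> + m" unfolding \<delta>_def by simp
  ultimately show ?thesis unfolding Wd_iff by blast
qed

lemma fixed_points_iff: "x \<in> fixed_points G M \<longleftrightarrow> x \<in> mcar M \<and> (\<forall>g\<in>carrier G. mact M g x = x)"
  unfolding fixed_points_def by simp

lemma cocycle_iff: "z \<in> dH1_cocycles G I1 I2 d1 \<longleftrightarrow>
    z \<in> mcar I1 \<and> (\<forall>g\<in>carrier G. mact I1 g z = z) \<and> d1 z = mzero I2"
  unfolding dH1_cocycles_def fixed_points_iff by auto

lemma Rel_cob:
  assumes R: "Rel z \<alpha>"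
  shows "z \<in> dH1_coboundaries G I0 d0 \<longleftrightarrow> \<alpha> \<in> Wd"
proof
  assume "z \<in> dH1_coboundaries G I0 d0"
  then obtain y0 where y0: "y0 \<in> mcar I0" "\<forall>g\<in>carrier G. mact I0 g y0 = y0" "z = d0 y0"
    unfolding dH1_coboundaries_def by (auto simp: fixed_points_iff)
  have "Rel z 0" unfolding Rel_def using y0 by auto
  from Rel_unique[OF R this] show "\<alpha> \<in> Wd" by simp
next
  assume "\<alpha> \<in> Wd"
  then obtain c \<beta> where cb: "c \<in> const_coset_funs G K" "\<beta> \<in> QGK_fixed G K" "\<alpha> = c + \<beta>"
    unfolding Wd_iff by blast
  have bM: "\<beta> \<in> Mc" using cb fixed_iff by blast
  obtain y where y: "y \<in> mcar I0" "d0 y = z"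
    "\<And>g. g \<in> carrier G \<Longrightarrow> mact I0 g y = madd I0 (\<epsilon> (coset_act G K g \<alpha> - \<alpha>)) y"
    using R unfolding Rel_def by blast
  define y' where "y' = madd I0 y (msmul I0 (-1) (\<epsilon> \<beta>))"
  have y'c: "y' \<in> mcar I0" unfolding y'_def using y bM by simp
  have zc: "z \<in> mcar I1" using y by auto
  have "d0 y' = z" unfolding y'_def using y bM zc by (simp add: d0_add d0_smul)
  moreover have "mact I0 g y' = y'" if g: "g \<in> carrier G" for g
  proof -
  have gb: "coset_act G K g \<beta> \<in> Mc" using Mc_act g bM by blast
    have eq: "coset_act G K g \<alpha> - \<alpha> = coset_act G K g \<beta> - \<beta>"
      unfolding cb(3) act_plus const_inv[OF cb(1) g] by simp
    have "mact I0 g y' = madd I0 (madd I0 (madd I0 (\<epsilon> (coset_act G K g \<beta>)) (msmul I0 (-1) (\<epsilon> \<beta>))) y)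
       (msmul I0 (-1) (\<epsilon> (coset_act G K g \<beta>)))"
    proof -
      have "mact I0 g y' = madd I0 (mact I0 g y) (msmul I0 (-1) (mact I0 g (\<epsilon> \<beta>)))"
        unfolding y'_def using g y bM by (simp add: act_add[OF QI0] act_smul[OF QI0])
      also have "mact I0 g (\<epsilon> \<beta>) = \<epsilon> (coset_act G K g \<beta>)" using e_act g bM by simp
      also have "mact I0 g y = madd I0 (\<epsilon> (coset_act G K g \<beta> - \<beta>)) y" using y(3)[OF g] eq by simp
      also have "\<epsilon> (coset_act G K g \<beta> - \<beta>) = madd I0 (\<epsilon> (coset_act G K g \<beta>)) (msmul I0 (-1) (\<epsilon> \<beta>))"
        using e_minus gb bM by simp
      finally show ?thesis .
    qed
    also have "\<dots> = y'"
    proof -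
      let ?a = "\<epsilon> (coset_act G K g \<beta>)" and ?b = "msmul I0 (-1) (\<epsilon> \<beta>)"
      have ab: "?a \<in> mcar I0" "?b \<in> mcar I0" using bM gb by auto
      have "madd I0 (madd I0 (madd I0 ?a ?b) y) (msmul I0 (-1) ?a)
          = madd I0 (msmul I0 (-1) ?a) (madd I0 ?a (madd I0 ?b y))"
        using ab y by (simp add: I0.add_assoc I0.add_comm[of _ "msmul I0 (-1) ?a"])
      also have "\<dots> = madd I0 ?b y" using ab y by simp
      also have "\<dots> = y'" unfolding y'_def using ab y by (simp add: I0.add_comm)
      finally show ?thesis .
    qed
    finally show ?thesis .
  qed
  ultimately have "y' \<in> fixed_points G I0" "d0 y' = z"
    unfolding fixed_points_iff using y'c by auto
  then show "z \<in> dH1_coboundaries G I0 d0"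
    unfolding dH1_coboundaries_def by (metis image_eqI)
qed

end


context setting
begin

definition j0 :: "('a set \<Rightarrow> rat) \<times> rat \<Rightarrow> ('a set \<Rightarrow> rat)" where
  "j0 p = (fst p)(K := of_nat (to_nat (fst p K, snd p)))"

lemma j0_Mc: "p \<in> Mc \<times> UNIV \<Longrightarrow> j0 p \<in> Mc"
proof -
  assume p: "p \<in> Mc \<times> UNIV"
  then have "fst p \<in> Mc" by auto
  then have m: "fst p \<in> coset_funs G K" "finite {x. fst p x \<noteq> 0}" using Mc_iff by blast+
  have "j0 p \<in> coset_funs G K" using m(1) K_lc unfolding coset_funs_def j0_def by auto
  moreover have "{x. j0 p x \<noteq> 0} \<subseteq> insert K {x. fst p x \<noteq> 0}" unfolding j0_def by auto
  then have "finite {x. j0 p x \<noteq> 0}" using m(2) finite_subset by blast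
  ultimately show ?thesis unfolding Mc_iff by blast
qed

lemma j0_inj: "inj_on j0 (Mc \<times> UNIV)"
proof (rule inj_onI)
  fix p p' assume "p \<in> Mc \<times> UNIV" "p' \<in> Mc \<times> UNIV" and eq: "j0 p = j0 p'"
  have "of_nat (to_nat (fst p K, snd p)) = (of_nat (to_nat (fst p' K, snd p')) :: rat)"
    using fun_cong[OF eq, of K] unfolding j0_def by simp
  then have 1: "fst p K = fst p' K" "snd p = snd p'" by (simp_all only: of_nat_eq_iff to_nat_split prod.inject)
  have "fst p x = fst p' x" for x
  proof (cases "x = K")
    case False then show ?thesis using fun_cong[OF eq, of x] unfolding j0_def by simp
  qed (use 1 in simp)
  then show "p = p'" using 1 by (simp add: prod_eq_iff fun_eq_iff)
qed

definition jj :: "('a set \<Rightarrow> rat) \<times> rat \<Rightarrow> 'm" where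
  "jj p = \<epsilon> (j0 p)"

lemma jj_inj: "inj_on jj (Mc \<times> UNIV)"
proof -
  have "inj_on \<epsilon> (j0 ` (Mc \<times> UNIV))" using inje j0_Mc by (meson image_subsetI inj_on_subset)
  then show ?thesis unfolding jj_def using j0_inj comp_inj_on[of j0 _ \<epsilon>] by (simp add: o_def)
qed

lemma Rel_surj:
  assumes a: "\<alpha> \<in> AInv G K"
  shows "\<exists>z. z \<in> dH1_cocycles G I1 I2 d1 \<and> Rel z \<alpha>"
proof -
  define c where "c g = coset_act G K g \<alpha> - \<alpha>" for g
  have af: "\<alpha> \<in> coset_funs G K" using a AInv_funs by blast
  have cM: "g \<in> carrier G \<Longrightarrow> c g \<in> Mc" for g unfolding c_def using a AInv_diff by blast
  have cK: "k \<in> K \<Longrightarrow> c k = 0" for k unfolding c_def using a AInv_K by simp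
  have c1: "c \<one> = 0" unfolding c_def using act_one_f af by simp
  have ccross: "c (g \<otimes> h) = c g + coset_act G K g (c h)" if "g \<in> carrier G" "h \<in> carrier G" for g h
    unfolding c_def using that af by (simp add: act_comp act_minus)
  define NE :: "('a, ('a set \<Rightarrow> rat) \<times> rat) qg_module" where
    "NE = \<lparr>mcar = Mc \<times> UNIV, madd = (\<lambda>p p'. (fst p + fst p', snd p + snd p')), mzero = (0, 0),
       msmul = (\<lambda>q p. (scl q (fst p), q * snd p)),
       mact = (\<lambda>g p. (coset_act G K g (fst p) + scl (snd p) (c g), snd p))\<rparr>"
  have NE_simps: "mcar NE = Mc \<times> UNIV" "madd NE p p' = (fst p + fst p', snd p + snd p')"
    "mzero NE = (0, 0)" "msmul NE q p = (scl q (fst p), q * snd p)"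
    "mact NE g p = (coset_act G K g (fst p) + scl (snd p) (c g), snd p)" for p p' q g
    unfolding NE_def by simp_all
  have rvNE: "rat_vector_space NE"
    unfolding rat_vector_space_def NE_simps
  proof (intro conjI ballI allI)
    fix x assume x: "x \<in> Mc \<times> (UNIV :: rat set)"
    show "\<exists>y\<in>Mc \<times> UNIV. (fst x + fst y, snd x + snd y) = (0, 0)"
    proof (rule bexI[of _ "(scl (-1) (fst x), - snd x)"])
      show "(fst x + fst (scl (- 1) (fst x), - snd x), snd x + snd (scl (- 1) (fst x), - snd x)) = (0, 0)"
        by (simp add: scl_def fun_eq_iff)
      show "(scl (- 1) (fst x), - snd x) \<in> Mc \<times> UNIV" using x Mc_scl by auto
    qed
  qed (auto simp: Mc_plus Mc_scl' scl_def fun_eq_iff algebra_simps)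
  have QNE: "qg_module G NE"
    unfolding qg_module_def
  proof (intro conjI rvNE ballI allI)
    fix g x assume g: "g \<in> carrier G" and x: "x \<in> mcar NE"
    show "mact NE g x \<in> mcar NE" using g x cM Mc_act Mc_plus Mc_scl by (auto simp: NE_simps)
    fix q show "mact NE g (msmul NE q x) = msmul NE q (mact NE g x)"
      by (simp add: NE_simps act_scl scl_plus) (simp add: scl_def fun_eq_iff)
  next
    fix g x y assume g: "g \<in> carrier G" and x: "x \<in> mcar NE" and y: "y \<in> mcar NE"
    show "mact NE g (madd NE x y) = madd NE (mact NE g x) (mact NE g y)"
      by (simp add: NE_simps act_plus) (simp add: scl_def fun_eq_iff algebra_simps)
  next
    fix x assume x: "x \<in> mcar NE"
    show "mact NE \<one> x = x" using x c1 act_one_f Mc_funs by (auto simp: NE_simps scl_def)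
  next
    fix g h x assume g: "g \<in> carrier G" and h: "h \<in> carrier G" and x: "x \<in> mcar NE"
    have "fst x \<in> coset_funs G K" using x Mc_funs by (auto simp: NE_simps)
    then show "mact NE (g \<otimes> h) x = mact NE g (mact NE h x)"
      using g h by (simp add: NE_simps act_comp ccross act_plus act_scl)
                   (simp add: scl_def fun_eq_iff algebra_simps)
  qed
  have DNE: "discrete_module G T NE"
    unfolding discrete_module_def
  proof (intro conjI QNE ballI)
    fix x assume x: "x \<in> mcar NE"
    let ?U = "{g \<in> carrier G. mact (QGK G K) g (fst x) = fst x} \<inter> K"
    have "openin T {g \<in> carrier G. mact (QGK G K) g (fst x) = fst x}"
      using DM x unfolding discrete_module_def by (auto simp: NE_simps)
    then have oU: "openin T ?U" using opK by blast
    show "openin T {g \<in> carrier G. mact NE g x = x}"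
    proof (rule open_by_subgroup[OF tg oU])
      show "\<one> \<in> ?U" using x act_one[OF QM] sgK subgroup.one_closed by (auto simp: NE_simps)
      show "{g \<in> carrier G. mact NE g x = x} \<subseteq> carrier G" by blast
      show "\<forall>s\<in>{g \<in> carrier G. mact NE g x = x}. \<forall>u\<in>?U. s \<otimes> u \<in> {g \<in> carrier G. mact NE g x = x}"
      proof (intro ballI)
        fix s u assume s: "s \<in> {g \<in> carrier G. mact NE g x = x}" and u: "u \<in> ?U"
        have "mact NE u x = x" using u cK by (auto simp: NE_simps QGK_ops prod_eq_iff scl_def)
        then show "s \<otimes> u \<in> {g \<in> carrier G. mact NE g x = x}"
          using s u x act_mult[OF QNE] by auto
      qed
    qed
  qed
  define NA where "NA = NE\<lparr>mcar := Mc \<times> {0}\<rparr>"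
  have DNA: "discrete_module G T NA" unfolding NA_def
  proof (rule sub_discrete[OF DNE])
    show "Mc \<times> {0} \<subseteq> mcar NE" by (auto simp: NE_simps)
    show "mzero NE \<in> Mc \<times> {0}" by (simp add: NE_simps)
    show "madd NE x y \<in> Mc \<times> {0}" if "x \<in> Mc \<times> {0}" "y \<in> Mc \<times> {0}" for x y
      using that Mc_plus by (auto simp: NE_simps)
    show "msmul NE q x \<in> Mc \<times> {0}" if "x \<in> Mc \<times> {0}" for q x
      using that Mc_scl by (auto simp: NE_simps)
    show "mact NE g x \<in> Mc \<times> {0}" if "g \<in> carrier G" "x \<in> Mc \<times> {0}" for g x
    proof -
      have "scl 0 (c g) = 0" by (simp add: scl_def fun_eq_iff)
      then show ?thesis using that Mc_act by (auto simp: NE_simps)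
    qed
  qed
  have NA_simps: "mcar NA = Mc \<times> {0}" "madd NA = madd NE" "msmul NA = msmul NE" "mzero NA = mzero NE"
    "mact NA = mact NE" unfolding NA_def by simp_all
  have QNA: "qg_module G NA" using DNA unfolding discrete_module_def by blast
  have "Mc \<times> {0} \<subseteq> Mc \<times> (UNIV :: rat set)" by auto
  then have injA: "inj_on jj (mcar NA)" using inj_on_subset[OF jj_inj] by (simp add: NA_simps)
  have injB: "inj_on jj (mcar NE)" using jj_inj by (simp add: NE_simps)
  define A where "A = tmod jj NA"
  define B where "B = tmod jj NE"
  define f where "f a = \<epsilon> (fst (inv_into (mcar NA) jj a))" for a
  have DA: "discrete_module G T A" unfolding A_def using tmod_discrete[OF injA DNA] .
  have DB: "discrete_module G T B" unfolding B_def using tmod_discrete[OF injB DNE] .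
  have hphi: "module_hom G NA I0 (\<lambda>p. \<epsilon> (fst p))"
    unfolding module_hom_def NA_simps
    by (auto simp: NE_simps e_plus e_scl e_act[symmetric] Mc_act)
  have hf: "module_hom G A I0 f" unfolding A_def f_def using tmod_hom_from[OF injA QNA hphi] .
  have hi: "module_hom G A B id"
    unfolding module_hom_def A_def B_def tmod_car
  proof (intro conjI ballI allI)
    fix a assume "a \<in> jj ` mcar NA"
    then show "id a \<in> jj ` mcar NE" by (auto simp: NA_simps NE_simps)
  next
    fix a b assume "a \<in> jj ` mcar NA" "b \<in> jj ` mcar NA"
    then obtain x y where "x \<in> mcar NA" "y \<in> mcar NA" "a = jj x" "b = jj y" by auto
    moreover then have "x \<in> mcar NE" "y \<in> mcar NE" by (auto simp: NA_simps NE_simps)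
    ultimately show "id (madd (tmod jj NA) a b) = madd (tmod jj NE) (id a) (id b)"
      using tmod_add[OF injA] tmod_add[OF injB] NA_simps by simp
  next
    fix q a assume "a \<in> jj ` mcar NA"
    then obtain x where "x \<in> mcar NA" "a = jj x" by auto
    moreover then have "x \<in> mcar NE" by (auto simp: NA_simps NE_simps)
    ultimately show "id (msmul (tmod jj NA) q a) = msmul (tmod jj NE) q (id a)"
      using tmod_smul[OF injA] tmod_smul[OF injB] NA_simps by simp
  next
    fix g a assume "g \<in> carrier G" "a \<in> jj ` mcar NA"
    then obtain x where "x \<in> mcar NA" "a = jj x" by auto
    moreover then have "x \<in> mcar NE" by (auto simp: NA_simps NE_simps)
    ultimately show "id (mact (tmod jj NA) g a) = mact (tmod jj NE) g (id a)"
      using tmod_act[OF injA] tmod_act[OF injB] NA_simps by simp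
  qed
  obtain h where h: "module_hom G B I0 h" "\<forall>a\<in>mcar A. h (id a) = f a"
    using injI0 DA DB hi hf unfolding injective_discrete_module_def by (metis inj_on_id)
  define H where "H p = h (jj p)" for p
  have hH: "module_hom G NE I0 H" unfolding H_def using tmod_hom_to[OF injB QNE] h(1) B_def by simp
  have H0: "H (m, 0) = \<epsilon> m" if m: "m \<in> Mc" for m
  proof -
    have "(m, 0) \<in> mcar NA" using m by (simp add: NA_simps)
    then have "H (m, 0) = f (jj (m, 0))" using h(2) unfolding H_def A_def tmod_car by simp
    also have "\<dots> = \<epsilon> m" unfolding f_def using injA \<open>(m, 0) \<in> mcar NA\<close> by simp
    finally show ?thesis .
  qed
  define y where "y = H (0, 1)"
  have yc: "y \<in> mcar I0" unfolding y_def using hom_closed[OF hH] by (simp add: NE_simps)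
  have gy: "mact I0 g y = madd I0 (\<epsilon> (c g)) y" if g: "g \<in> carrier G" for g
  proof -
    have "mact I0 g y = H (mact NE g (0, 1))" unfolding y_def using hom_act[OF hH g, of "(0, 1)"] by (simp add: NE_simps)
    also have "mact NE g (0, 1) = madd NE (c g, 0) (0, 1)" by (simp add: NE_simps scl_def)
    also have "H \<dots> = madd I0 (H (c g, 0)) (H (0, 1))" using hom_add[OF hH, of "(c g, 0)" "(0, 1)"] cM[OF g] by (simp add: NE_simps)
    finally show ?thesis using H0 cM[OF g] unfolding y_def by simp
  qed
  define z where "z = d0 y"
  have gy': "\<forall>g\<in>carrier G. mact I0 g y = madd I0 (\<epsilon> (coset_act G K g \<alpha> - \<alpha>)) y"
    using gy unfolding c_def by blast
  have R: "Rel z \<alpha>" unfolding Rel_def z_def by (intro conjI a bexI[of _ y]) (use yc gy' in auto)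
  have zc: "z \<in> mcar I1" unfolding z_def using yc by simp
  have "mact I1 g z = z" if g: "g \<in> carrier G" for g
    unfolding z_def using g yc cM[OF g] by (simp add: d0_act[symmetric] gy d0_add)
  moreover have "d1 z = mzero I2" using kerd1 yc unfolding z_def by blast
  ultimately have "z \<in> dH1_cocycles G I1 I2 d1" unfolding cocycle_iff using zc by blast
  then show ?thesis using R by blast
qed

end


section \<open>Complements of subspaces of function spaces\<close>

interpretation fvs: vector_space "scl :: rat \<Rightarrow> ('x \<Rightarrow> rat) \<Rightarrow> ('x \<Rightarrow> rat)"
  by unfold_locales (auto simp: scl_def fun_eq_iff algebra_simps)

interpretation fvp: vector_space_pair "scl :: rat \<Rightarrow> ('x \<Rightarrow> rat) \<Rightarrow> ('x \<Rightarrow> rat)"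
    "scl :: rat \<Rightarrow> ('x \<Rightarrow> rat) \<Rightarrow> ('x \<Rightarrow> rat)"
  by unfold_locales

lemma complement_proj:
  fixes W :: "('x \<Rightarrow> rat) set"
  assumes W: "0 \<in> W" "\<And>v w. v \<in> W \<Longrightarrow> w \<in> W \<Longrightarrow> v + w \<in> W" "\<And>q w. w \<in> W \<Longrightarrow> scl q w \<in> W"
  shows "\<exists>Q. (\<forall>v w. Q (v + w) = Q v + Q w) \<and> (\<forall>q v. Q (scl q v) = scl q (Q v)) \<and>
     (\<forall>v. Q v \<in> W) \<and> (\<forall>w\<in>W. Q w = w)"
proof -
  have sW: "fvs.subspace W" using W by (auto simp: fvs.subspace_def)
  obtain B where B: "B \<subseteq> W" "fvs.independent B" "W \<subseteq> fvs.span B"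
    using fvs.maximal_independent_subset[of W] by blast
  have spB: "fvs.span B = W" using B fvs.span_minimal[OF B(1) sW] by blast
  define Q where "Q = fvp.construct B id"
  have lin: "Vector_Spaces.linear scl scl Q" unfolding Q_def by (rule fvp.linear_construct[OF B(2)])
  have 1: "\<forall>v w. Q (v + w) = Q v + Q w" "\<forall>q v. Q (scl q v) = scl q (Q v)"
    using lin unfolding Vector_Spaces.linear_iff by auto
  have 2: "\<forall>v. Q v \<in> W" using fvp.construct_in_span[OF B(2), of id] spB unfolding Q_def by simp
  have 3: "\<forall>w\<in>W. Q w = w"
  proof
    fix w assume "w \<in> W"
    then have "w \<in> fvs.span B" using spB by simp
    then have "Q w = id w"
      using fvp.linear_eq_on[OF lin fvs.linear_id] fvp.construct_basis[OF B(2)] unfolding Q_def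
      by blast
    then show "Q w = w" by simp
  qed
  show ?thesis using 1 2 3 by blast
qed

context setting
begin

lemma Rel_ex:
  assumes zZ: "z \<in> dH1_cocycles G I1 I2 d1"
  shows "\<exists>\<alpha>. Rel z \<alpha>"
proof -
  have zc: "z \<in> mcar I1" and zG: "\<And>g. g \<in> carrier G \<Longrightarrow> mact I1 g z = z" and zd: "d1 z = mzero I2"
    using zZ unfolding cocycle_iff by auto
  obtain y0 where y0: "y0 \<in> mcar I0" "d0 y0 = z" using kerd1 zc zd by (metis (mono_tags, lifting) imageE mem_Collect_eq)
  define u where "u g = madd I0 (mact I0 g y0) (msmul I0 (-1) y0)" for g
  have uc: "u g \<in> mcar I0" if "g \<in> carrier G" for g unfolding u_def using that y0 by simp
  have uk: "u g \<in> \<epsilon> ` Mc" if g: "g \<in> carrier G" for g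
  proof -
    have "d0 (u g) = madd I1 (mact I1 g z) (msmul I1 (-1) z)"
      unfolding u_def using g y0 by (simp add: d0_add d0_smul d0_act)
    also have "\<dots> = mzero I1" using zG[OF g] zc by simp
    finally show ?thesis using kerd0 uc[OF g] by blast
  qed
  define c where "c g = inv_into Mc \<epsilon> (u g)" for g
  have cM: "c g \<in> Mc" if "g \<in> carrier G" for g unfolding c_def using uk[OF that] by (auto intro: inv_into_into)
  have ce: "\<epsilon> (c g) = u g" if "g \<in> carrier G" for g unfolding c_def using uk[OF that] by (simp add: f_inv_into_f)
  have gy0: "mact I0 g y0 = madd I0 (\<epsilon> (c g)) y0" if g: "g \<in> carrier G" for g
    unfolding ce[OF g] u_def using g y0 by (simp add: I0.add_assoc)
  have ccross: "c (g \<otimes> h) = c g + coset_act G K g (c h)" if g: "g \<in> carrier G" and h: "h \<in> carrier G" for g h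
  proof (rule e_inj)
    show "c (g \<otimes> h) \<in> Mc" using cM g h by simp
    show "c g + coset_act G K g (c h) \<in> Mc" using cM g h Mc_act Mc_plus by simp
    have "\<epsilon> (c g + coset_act G K g (c h)) = madd I0 (u g) (mact I0 g (u h))"
      using cM g h Mc_act by (simp add: e_plus e_act ce)
    also have "mact I0 g (u h) = madd I0 (mact I0 (g \<otimes> h) y0) (msmul I0 (-1) (mact I0 g y0))"
      unfolding u_def using g h y0 by (simp add: act_add[OF QI0] act_smul[OF QI0] act_mult[OF QI0])
    also have "madd I0 (u g) \<dots> = u (g \<otimes> h)"
      unfolding u_def using g h y0 by (simp add: I0.sub_chain)
    finally have "\<epsilon> (c g + coset_act G K g (c h)) = u (g \<otimes> h)" .
    moreover have gh: "g \<otimes> h \<in> carrier G" using g h by simp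
    ultimately show "\<epsilon> (c (g \<otimes> h)) = \<epsilon> (c g + coset_act G K g (c h))"
      by (subst ce[OF gh]) (rule sym)
  qed
  define U where "U = {g \<in> carrier G. mact I0 g y0 = y0} \<inter> K"
  have Uc: "U \<subseteq> carrier G" unfolding U_def by blast
  have sgU: "subgroup U G"
  proof -
    have "subgroup {g \<in> carrier G. mact I0 g y0 = y0} G"
    proof (rule subgroupI)
      show "{g \<in> carrier G. mact I0 g y0 = y0} \<noteq> {}" using act_one[OF QI0 y0(1)] by blast
      fix a assume a: "a \<in> {g \<in> carrier G. mact I0 g y0 = y0}"
      then have "mact I0 (inv a) y0 = mact I0 (inv a) (mact I0 a y0)" by simp
      also have "\<dots> = y0" using a y0 act_mult[OF QI0, of "inv a" a y0, symmetric] act_one[OF QI0 y0(1)] by simp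
      finally show "inv a \<in> {g \<in> carrier G. mact I0 g y0 = y0}" using a by simp
      fix b assume b: "b \<in> {g \<in> carrier G. mact I0 g y0 = y0}"
      then show "a \<otimes> b \<in> {g \<in> carrier G. mact I0 g y0 = y0}" using a y0 act_mult[OF QI0] by simp
    qed auto
    then show ?thesis unfolding U_def using subgroups_Inter_pair sgK by blast
  qed
  have oU: "openin T U"
  proof -
    have "openin T {g \<in> carrier G. mact I0 g y0 = y0}"
      using DI0 y0 unfolding discrete_module_def by blast
    then show ?thesis unfolding U_def using opK by blast
  qed
  have cU: "c v = 0" if "v \<in> U" for v
  proof (rule e_inj)
    show "c v \<in> Mc" "0 \<in> Mc" using that cM Uc by auto
    show "\<epsilon> (c v) = \<epsilon> 0" using that y0 ce[of v] Uc unfolding U_def u_def by auto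
  qed
  have cconst: "c a = c b" if a: "a \<in> carrier G" and b: "b \<in> carrier G" and ab: "a <# U = b <# U" for a b
  proof -
    have "b \<in> a <# U" using ab lcos_self[OF b sgU] by simp
    then obtain v where v: "v \<in> U" "b = a \<otimes> v" unfolding l_coset_def by blast
    then show ?thesis using ccross[OF a, of v] cU[OF v(1)] Uc by auto
  qed
  define Kc where "Kc = (\<lambda>k. k <# U) ` K"
  have finKc: "finite Kc"
  proof -
    have cov: "\<forall>V\<in>Kc. openin T V" unfolding Kc_def
      using translate_open[OF tg _ oU Uc] K_sub by blast
    have "K \<subseteq> \<Union>Kc" unfolding Kc_def using lcos_self[OF _ sgU] K_sub by blast
    then obtain F where F: "finite F" "F \<subseteq> Kc" "K \<subseteq> \<Union>F"
      using cpK cov unfolding compactin_def by meson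
    have "Kc \<subseteq> F"
    proof
      fix X assume "X \<in> Kc"
      then obtain k where k: "k \<in> K" "X = k <# U" unfolding Kc_def by blast
      then obtain Y where Y: "Y \<in> F" "k \<in> Y" using F by blast
      then obtain k' where k': "k' \<in> K" "Y = k' <# U" using F unfolding Kc_def by blast
      have "k' <# U = k <# U" using l_repr_independence[of k k' U] Y k' K_sub sgU by blast
      then show "X \<in> F" using k k' Y by simp
    qed
    then show ?thesis using F finite_subset by blast
  qed
  define rep where "rep X = (SOME k. k \<in> K \<and> X = k <# U)" for X
  have rep: "rep X \<in> K" "X = rep X <# U" if "X \<in> Kc" for X
  proof -
    have "\<exists>k. k \<in> K \<and> X = k <# U" using that unfolding Kc_def by blast
    then have "rep X \<in> K \<and> X = rep X <# U" unfolding rep_def by (rule someI_ex)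
    then show "rep X \<in> K" "X = rep X <# U" by auto
  qed
  define n where "n = card Kc"
  have n0: "n \<noteq> 0"
  proof -
    have "\<one> <# U \<in> Kc" unfolding Kc_def using subgroup.one_closed[OF sgK] by blast
    then show ?thesis unfolding n_def using finKc by auto
  qed
  define m where "m = (\<lambda>x. (- 1 / of_nat n) * (\<Sum>X\<in>Kc. c (rep X) x))"
  have mM: "m \<in> Mc"
  proof -
    have "c (rep X) \<in> Mc" if "X \<in> Kc" for X using cM rep(1)[OF that] K_sub by blast
    then have "(\<lambda>x. \<Sum>X\<in>Kc. c (rep X) x) \<in> Mc" by (rule Mc_sum[OF finKc])
    then show ?thesis unfolding m_def by (rule Mc_scl')
  qed
  have mK: "coset_act G K k m = m + c k" if k: "k \<in> K" for k
  proof -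
    have kG: "k \<in> carrier G" using k K_sub by blast
    define \<sigma> where "\<sigma> X = k <# X" for X
    have \<sigma>rep: "\<sigma> X = (k \<otimes> rep X) <# U" if "X \<in> Kc" for X
    proof -
      have rG: "rep X \<in> carrier G" using rep(1)[OF that] K_sub by blast
      have "k <# X = k <# (rep X <# U)" using rep(2)[OF that] by simp
      also have "\<dots> = (k \<otimes> rep X) <# U" by (rule lcos_m_assoc[OF Uc kG rG])
      finally show ?thesis unfolding \<sigma>_def .
    qed
    have \<sigma>Kc: "\<sigma> X \<in> Kc" if "X \<in> Kc" for X
    proof -
      have "k \<otimes> rep X \<in> K" using subgroup.m_closed[OF sgK k rep(1)[OF that]] .
      then show ?thesis unfolding \<sigma>rep[OF that] Kc_def by (rule imageI)
    qed
    have inj\<sigma>: "inj_on \<sigma> Kc"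
    proof (rule inj_onI)
      fix X Y assume X: "X \<in> Kc" and Y: "Y \<in> Kc" and e: "\<sigma> X = \<sigma> Y"
      have XY: "X \<subseteq> carrier G" "Y \<subseteq> carrier G"
        using l_coset_subset_G[OF Uc] rep[OF X] rep[OF Y] K_sub by auto
      have "inv k <# \<sigma> X = inv k <# \<sigma> Y" using e by simp
      then show "X = Y" using XY kG unfolding \<sigma>_def by (simp add: lcos_m_assoc lcos_mult_one)
    qed
    have im\<sigma>: "\<sigma> ` Kc = Kc"
    proof
      show "\<sigma> ` Kc \<subseteq> Kc" using \<sigma>Kc by blast
      show "Kc \<subseteq> \<sigma> ` Kc"
      proof
        fix Y assume "Y \<in> Kc"
        then obtain k1 where k1: "k1 \<in> K" "Y = k1 <# U" unfolding Kc_def by blast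
        have k2: "inv k \<otimes> k1 \<in> K" using k k1 sgK by (simp add: subgroup.m_closed subgroup.m_inv_closed)
        then have X: "(inv k \<otimes> k1) <# U \<in> Kc" unfolding Kc_def by blast
        have "\<sigma> ((inv k \<otimes> k1) <# U) = Y" unfolding \<sigma>_def k1(2) using kG k1 K_sub Uc
          by (simp add: lcos_m_assoc m_assoc[symmetric] subsetD)
        then show "Y \<in> \<sigma> ` Kc" using X by (metis imageI)
      qed
    qed
    have cc\<sigma>: "c (rep (\<sigma> X)) = c (k \<otimes> rep X)" if X: "X \<in> Kc" for X
    proof (rule cconst)
      show "rep (\<sigma> X) \<in> carrier G" using rep(1)[OF \<sigma>Kc[OF X]] K_sub by blast
      show "k \<otimes> rep X \<in> carrier G" using rep(1)[OF X] K_sub kG by blast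
      show "rep (\<sigma> X) <# U = (k \<otimes> rep X) <# U" using rep(2)[OF \<sigma>Kc[OF X]] \<sigma>rep[OF X] by simp
    qed
    have sum_eq: "(\<Sum>X\<in>Kc. c (rep (\<sigma> X)) x) = (\<Sum>X\<in>Kc. c (rep X) x)" for x
      using sum.reindex[OF inj\<sigma>, of "\<lambda>X. c (rep X) x"] im\<sigma> by (simp add: o_def)
    have act_c: "coset_act G K k (c (rep X)) = c (rep (\<sigma> X)) - c k" if X: "X \<in> Kc" for X
      using ccross[OF kG, of "rep X"] cc\<sigma>[OF X] rep(1)[OF X] K_sub by auto
    show ?thesis
    proof
      fix x
      show "coset_act G K k m x = (m + c k) x"
      proof (cases "x \<in> lcosets K")
        case False
        then show ?thesis using Mc_funs[OF cM[OF kG]] Mc_funs[OF mM] unfolding coset_act_def coset_funs_def by auto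
      next
        case True
        have "coset_act G K k m x = (- 1 / of_nat n) * (\<Sum>X\<in>Kc. coset_act G K k (c (rep X)) x)"
          using True unfolding coset_act_def m_def by simp
        also have "(\<Sum>X\<in>Kc. coset_act G K k (c (rep X)) x) = (\<Sum>X\<in>Kc. c (rep (\<sigma> X)) x - c k x)"
          using act_c by (intro sum.cong) auto
        also have "\<dots> = (\<Sum>X\<in>Kc. c (rep X) x) - of_nat n * c k x"
          by (simp add: sum_subtractf sum_eq n_def)
        finally show ?thesis unfolding m_def using n0 by (simp add: field_simps)
      qed
    qed
  qed
  define c' where "c' g = c g - (coset_act G K g m - m)" for g
  have c'M: "c' g \<in> Mc" if "g \<in> carrier G" for g
    unfolding c'_def using that cM mM Mc_act Mc_minus by simp
  have c'K: "c' k = 0" if "k \<in> K" for k unfolding c'_def using mK[OF that] by simp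
  have c'cross: "c' (g \<otimes> h) = c' g + coset_act G K g (c' h)" if g: "g \<in> carrier G" and h: "h \<in> carrier G" for g h
  proof -
    have "coset_act G K (g \<otimes> h) m = coset_act G K g (coset_act G K h m)"
      using act_comp mM Mc_funs g h by blast
    then show ?thesis unfolding c'_def using ccross[OF g h] by (simp add: act_minus act_plus algebra_simps)
  qed
  define y where "y = madd I0 y0 (msmul I0 (-1) (\<epsilon> m))"
  have yc: "y \<in> mcar I0" unfolding y_def using y0 mM by simp
  have dy: "d0 y = z" unfolding y_def using y0 mM zc by (simp add: d0_add d0_smul)
  have gy: "mact I0 g y = madd I0 (\<epsilon> (c' g)) y" if g: "g \<in> carrier G" for g
  proof -
    let ?A = "\<epsilon> (c g)" and ?B = "msmul I0 (-1) (\<epsilon> (coset_act G K g m))" and ?E = "\<epsilon> m"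
    have AB: "?A \<in> mcar I0" "?B \<in> mcar I0" "?E \<in> mcar I0" using cM g mM Mc_act by auto
    have "mact I0 g y = madd I0 (madd I0 ?A y0) ?B"
      unfolding y_def using g y0 mM by (simp add: act_add[OF QI0] act_smul[OF QI0] gy0 e_act)
    moreover have "\<epsilon> (c' g) = madd I0 (madd I0 ?A ?B) ?E"
    proof -
      have "c' g = (c g - coset_act G K g m) + m" unfolding c'_def by simp
      then show ?thesis using cM g mM Mc_act Mc_minus by (simp add: e_plus e_minus)
    qed
    moreover have "madd I0 (madd I0 (madd I0 ?A ?B) ?E) y = madd I0 (madd I0 ?A y0) ?B"
    proof -
      have "madd I0 (madd I0 (madd I0 ?A ?B) ?E) y = madd I0 (madd I0 ?A ?B) (madd I0 ?E (madd I0 (msmul I0 (-1) ?E) y0))"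
        unfolding y_def using AB y0 by (simp add: I0.add_assoc I0.add_comm[of y0])
      also have "\<dots> = madd I0 (madd I0 ?A ?B) y0" using AB y0 by simp
      also have "\<dots> = madd I0 (madd I0 ?A y0) ?B" using AB y0 by (simp add: I0.add_assoc I0.add_comm[of ?B])
      finally show ?thesis .
    qed
    ultimately show ?thesis by simp
  qed
  define rp where "rp X = (SOME x. x \<in> carrier G \<and> X = x <# K)" for X
  define \<alpha> where "\<alpha> X = (if X \<in> lcosets K then c' (inv (rp X)) K else 0)" for X
  have Kk: "k <# K = K" if "k \<in> K" for k
    using l_repr_independence[of k \<one> K] that sgK lcos_mult_one[OF K_sub] by simp
  have \<alpha>_at: "\<alpha> (x <# K) = c' (inv x) K" if x: "x \<in> carrier G" for x
  proof -
    have ex: "\<exists>r. r \<in> carrier G \<and> x <# K = r <# K" using x by blast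
    have r: "rp (x <# K) \<in> carrier G" "x <# K = rp (x <# K) <# K"
      using someI_ex[OF ex] unfolding rp_def by auto
    define r where "r = rp (x <# K)"
    have "x \<in> r <# K" using r lcos_self[OF x sgK] unfolding r_def by simp
    then obtain k where k: "k \<in> K" "x = r \<otimes> k" unfolding l_coset_def by blast
    have kG: "k \<in> carrier G" using k K_sub by blast
    have rG: "r \<in> carrier G" using r unfolding r_def by simp
    have "c' (inv x) = c' (inv k) + coset_act G K (inv k) (c' (inv r))"
      using k(2) kG rG c'cross[of "inv k" "inv r"] by (simp add: inv_mult_group)
    then have "c' (inv x) K = c' (inv k) K + coset_act G K (inv k) (c' (inv r)) (\<one> <# K)"
      using lcos_mult_one[OF K_sub] by simp
    also have "\<dots> = c' (inv r) K"
      using c'K[of "inv k"] k sgK act_at[of "inv k" \<one> "c' (inv r)"] kG Kk[OF k(1)]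
      by (simp add: subgroup.m_inv_closed)
    finally show ?thesis unfolding \<alpha>_def r_def using lc_mem[OF x] by simp
  qed
  have \<alpha>act: "coset_act G K g \<alpha> - \<alpha> = c' g" if g: "g \<in> carrier G" for g
  proof
    fix X
    show "(coset_act G K g \<alpha> - \<alpha>) X = c' g X"
    proof (cases "X \<in> lcosets K")
      case False
      then show ?thesis using c'M[OF g] Mc_funs unfolding coset_act_def coset_funs_def \<alpha>_def by auto
    next
      case True
      then obtain x where x: "x \<in> carrier G" "X = x <# K" using lc_cases by blast
      have "coset_act G K g \<alpha> X = c' (inv x \<otimes> g) K"
        using x g act_at \<alpha>_at by (simp add: inv_mult_group)
      also have "\<dots> = c' (inv x) K + coset_act G K (inv x) (c' g) (\<one> <# K)"
        using c'cross[of "inv x" g] x g lcos_mult_one[OF K_sub] by simp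
      also have "\<dots> = \<alpha> X + c' g X"
        using x g act_at[of "inv x" \<one> "c' g"] \<alpha>_at by simp
      finally show ?thesis by simp
    qed
  qed
  have \<alpha>A: "\<alpha> \<in> AInv G K"
  proof (rule AInv_I)
    show "\<alpha> \<in> coset_funs G K" unfolding coset_funs_def \<alpha>_def by simp
    show "coset_act G K g \<alpha> - \<alpha> \<in> Mc" if "g \<in> carrier G" for g using \<alpha>act[OF that] c'M[OF that] by simp
    show "coset_act G K k \<alpha> = \<alpha>" if "k \<in> K" for k
      using \<alpha>act[of k] c'K[OF that] that K_sub by (metis subsetD eq_iff_diff_eq_0)
  qed
  have "Rel z \<alpha>" unfolding Rel_def
  proof (intro conjI \<alpha>A bexI[of _ y] yc ballI)
    show "d0 y = z" by (rule dy)
    fix g assume g: "g \<in> carrier G"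
    show "mact I0 g y = madd I0 (\<epsilon> (coset_act G K g \<alpha> - \<alpha>)) y" using gy[OF g] \<alpha>act[OF g] by simp
  qed
  then show ?thesis by blast
qed

lemma main: "quotient_iso (dH1_cocycles G I1 I2 d1) (madd I1) (msmul I1) (dH1_coboundaries G I0 d0)
           (AInv G K) Wd"
proof -
  obtain Q where Q: "\<forall>v w. Q (v + w) = Q v + Q w" "\<forall>q v. Q (scl q v) = scl q (Q v)"
     "\<forall>v. Q v \<in> Wd" "\<forall>w\<in>Wd. Q w = w"
  proof -
    have "\<exists>Q. (\<forall>v w. Q (v + w) = Q v + Q w) \<and> (\<forall>q v. Q (scl q v) = scl q (Q v)) \<and>
     (\<forall>v. Q v \<in> Wd) \<and> (\<forall>w\<in>Wd. Q w = w)"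
      by (rule complement_proj[of Wd, OF Wd_zero Wd_plus Wd_scl])
    then show ?thesis using that by (elim exE conjE)
  qed
  have Qminus: "Q (v - w) = Q v - Q w" for v w
  proof -
    have "Q ((v - w) + w) = Q (v - w) + Q w" using Q(1) by blast
    then show ?thesis by simp
  qed
  let ?Z = "dH1_cocycles G I1 I2 d1"
  define rep where "rep z = (SOME \<alpha>. Rel z \<alpha>)" for z
  define f where "f z = rep z - Q (rep z)" for z
  have Rrep: "Rel z (rep z)" if "z \<in> ?Z" for z
    unfolding rep_def using Rel_ex[OF that] by (rule someI_ex)
  have Rrep': "Rel z (rep z)" if "Rel z \<alpha>" for z \<alpha>
    unfolding rep_def using that by (rule someI[of "Rel z" \<alpha>])
  have fW: "f z = f' " if "Rel z \<alpha>" and "f' = \<alpha> - Q \<alpha>" for z \<alpha> f'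
  proof -
    have d: "rep z - \<alpha> \<in> Wd" using Rel_unique[OF Rrep'[OF that(1)] that(1)] .
    have "f z - (\<alpha> - Q \<alpha>) = (rep z - \<alpha>) - Q (rep z - \<alpha>)" unfolding f_def Qminus by simp
    also have "\<dots> = 0" using Q(4) d by simp
    finally show ?thesis using that(2) by simp
  qed
  have Rel_AInv: "Rel z \<alpha> \<Longrightarrow> \<alpha> \<in> AInv G K" for z \<alpha> unfolding Rel_def by (rule conjunct1)
  show ?thesis unfolding quotient_iso_def
  proof (intro exI[of _ f] conjI ballI allI)
    fix z assume z: "z \<in> ?Z"
    show "f z \<in> AInv G K" unfolding f_def
      using Rel_AInv[OF Rrep[OF z]] Q(3) Wd_AInv AInv_minus by blast
    show "f z \<in> Wd \<longleftrightarrow> z \<in> dH1_coboundaries G I0 d0"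
    proof -
      have "f z \<in> Wd \<longleftrightarrow> rep z \<in> Wd"
      proof
        assume "f z \<in> Wd"
        then have "f z + Q (rep z) \<in> Wd" using Q(3) Wd_plus by blast
        then show "rep z \<in> Wd" unfolding f_def by simp
      next
        assume "rep z \<in> Wd" then show "f z \<in> Wd" unfolding f_def using Q(3) Wd_minus by blast
      qed
      also have "\<dots> \<longleftrightarrow> z \<in> dH1_coboundaries G I0 d0" using Rel_cob[OF Rrep[OF z]] by simp
      finally show ?thesis .
    qed
    fix q show "f (msmul I1 q z) = (\<lambda>a. q * f z a)"
    proof -
      have R: "Rel (msmul I1 q z) (scl q (rep z))" using Rel_scl[OF Rrep[OF z]] .
      have "f (msmul I1 q z) = scl q (rep z) - Q (scl q (rep z))" by (rule fW[OF R]) simp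
      also have "\<dots> = scl q (f z)" using Q(2) by (simp add: f_def scl_minus)
      finally show ?thesis by (simp add: scl_def)
    qed
  next
    fix x y assume x: "x \<in> ?Z" and y: "y \<in> ?Z"
    have R: "Rel (madd I1 x y) (rep x + rep y)" using Rel_plus[OF Rrep[OF x] Rrep[OF y]] .
    have "f (madd I1 x y) = (rep x + rep y) - Q (rep x + rep y)" by (rule fW[OF R]) simp
    also have "\<dots> = f x + f y" using Q(1) by (simp add: f_def)
    finally show "f (madd I1 x y) = (\<lambda>a. f x a + f y a)" by (simp add: plus_fun_def)
  next
    fix a assume a: "a \<in> AInv G K"
    obtain z where z: "z \<in> ?Z" "Rel z a" using Rel_surj[OF a] by blast
    have "f z = a - Q a" by (rule fW[OF z(2)]) simp
    then have "(\<lambda>b. a b - f z b) = Q a" by (simp add: fun_eq_iff)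
    then show "\<exists>z\<in>?Z. (\<lambda>b. a b - f z b) \<in> Wd" by (intro bexI[of _ z]) (simp_all add: z(1) Q(3))
  qed
qed

end

theorem proposition3p3:
  fixes G :: "('g, 'b) monoid_scheme" and T :: "'g topology" and K :: "'g set"
    and I0 I1 I2 :: "('g, 'm) qg_module"
    and \<epsilon> :: "('g set \<Rightarrow> rat) \<Rightarrow> 'm" and d0 d1 :: "'m \<Rightarrow> 'm"
  assumes "tdlc_group G T"
    and "subgroup K G" and "openin T K" and "compactin T K"
    and "injective_resolution_1 G T (QGK G K) I0 I1 I2 \<epsilon> d0 d1"
  shows "quotient_iso (dH1_cocycles G I1 I2 d1) (madd I1) (msmul I1) (dH1_coboundaries G I0 d0)
           (AInv G K) {(\<lambda>x. c x + \<beta> x) |c \<beta>. c \<in> const_coset_funs G K \<and> \<beta> \<in> QGK_fixed G K}"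
proof -
  have grp: "group G"
    using assms(1) unfolding tdlc_group_def topological_group_def by blast
  interpret setting G K T I0 I1 I2 \<epsilon> d0 d1
    by (intro setting.intro cs.intro setting_axioms.intro grp cs_axioms.intro assms)
  show ?thesis using main unfolding Wd_def .
qed

end
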